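(* Let $H=(V,E)$ be a $k$-uniform hypergraph such that every strongly connected component of $H$ contains a copy of $K_{k+1}^k$ (i.e. a set of $k+1$ vertices all of whose $k$-subsets are hyperedges). Then $\operatorname{rank}\mathcal A_d(H)=|V|$ for all $d\geq k$.
   Context: A $k$-uniform hypergraph $H=(V,E)$ has finite vertex set $V$ and hyperedges $E$, $k$-subsets of $V$. $H$ is strongly connected if for any two distinct $\Delta,\Delta'\in E$ there are hyperedges $\Delta=\Delta_1,\Delta_2,\dots,\Delta_m=\Delta'$ with $|\Delta_i\cap\Delta_{i+1}|=k-1$ for all $i$; strongly connected components are the maximal strongly connected sub-hypergraphs (their hyperedge sets partition $E$). For $p:V\to\mathbb R^d$ with $p(\Delta)$ in general position for every $\Delta\in E$, let $p_\Delta$ be the orthogonal projection of the origin onto the affine span of $p(\Delta)$, written uniquely as $p_\Delta=\sum_{x\in\Delta}\alpha_x p(x)$ with $\sum_{x\in\Delta}\alpha_x=1$; $A(H,p)$ is the $|E|\times|V|$ matrix with entry $\alpha_x$ in row $\Delta$, column $x$ if $x\in\Delta$ and $0$ otherwise. $\mathcal A_d(H)$ is the row matroid of $A(H,p)$ for generic $p:V\to\mathbb R^d$ (coordinates algebraically independent over $\mathbb Q$). *)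

theory Defs
  imports Complex_Main
begin

definition k_uniform :: "nat \<Rightarrow> 'a set \<Rightarrow> 'a set set \<Rightarrow> bool" where
  "k_uniform k V E \<longleftrightarrow> finite V \<and> (\<forall>\<Delta>\<in>E. \<Delta> \<subseteq> V \<and> card \<Delta> = k)"

definition hyp_adj :: "nat \<Rightarrow> 'a set set \<Rightarrow> 'a set \<Rightarrow> 'a set \<Rightarrow> bool" where
  "hyp_adj k E D D' \<longleftrightarrow> D \<in> E \<and> D' \<in> E \<and> card (D \<inter> D') = k - 1"

definition strongly_conn_rel :: "nat \<Rightarrow> 'a set set \<Rightarrow> 'a set \<Rightarrow> 'a set \<Rightarrow> bool" where
  "strongly_conn_rel k E = (hyp_adj k E)\<^sup>*\<^sup>*"

definition strong_components :: "nat \<Rightarrow> 'a set set \<Rightarrow> 'a set set set" where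
  "strong_components k E = {{D'. D' \<in> E \<and> strongly_conn_rel k E D D'} | D. D \<in> E}"

definition contains_simplex :: "nat \<Rightarrow> 'a set \<Rightarrow> 'a set set \<Rightarrow> bool" where
  "contains_simplex k V C \<longleftrightarrow>
     (\<exists>S. S \<subseteq> V \<and> finite S \<and> card S = k + 1 \<and> (\<forall>T. T \<subseteq> S \<and> card T = k \<longrightarrow> T \<in> C))"

text \<open>A polynomial with rational coefficients is a finite rational combination of
  monomials; a monomial is an exponent vector with finite support inside I.\<close>
definition alg_indep_over_Q :: "'i set \<Rightarrow> ('i \<Rightarrow> real) \<Rightarrow> bool" where
  "alg_indep_over_Q I x \<longleftrightarrow>
     (\<forall>(M :: ('i \<Rightarrow> nat) set) (c :: ('i \<Rightarrow> nat) \<Rightarrow> rat).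
        finite M \<and> (\<forall>m\<in>M. finite {i. m i \<noteq> 0} \<and> {i. m i \<noteq> 0} \<subseteq> I) \<and>
        (\<Sum>m\<in>M. of_rat (c m) * (\<Prod>i\<in>{i. m i \<noteq> 0}. x i ^ m i)) = 0
        \<longrightarrow> (\<forall>m\<in>M. c m = 0))"

text \<open>Configurations p : V -> R^d, points represented as nat => real, only
  coordinates i < d are used. Generic: all coordinates p v i (v in V, i < d)
  algebraically independent over Q.\<close>
definition generic_config :: "nat \<Rightarrow> 'a set \<Rightarrow> ('a \<Rightarrow> nat \<Rightarrow> real) \<Rightarrow> bool" where
  "generic_config d V p \<longleftrightarrow> alg_indep_over_Q (V \<times> {..<d}) (\<lambda>(v, i). p v i)"

text \<open>Affine coefficients of the orthogonal projection of the origin onto the affine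
  span of p(D): coefficients supported on D summing to 1, whose point is orthogonal
  to all differences p x - p y (x, y in D).\<close>
definition proj_coeffs :: "nat \<Rightarrow> ('a \<Rightarrow> nat \<Rightarrow> real) \<Rightarrow> 'a set \<Rightarrow> 'a \<Rightarrow> real" where
  "proj_coeffs d p D = (THE \<alpha>. (\<forall>x. x \<notin> D \<longrightarrow> \<alpha> x = 0) \<and> (\<Sum>x\<in>D. \<alpha> x) = 1 \<and>
      (\<forall>x\<in>D. \<forall>y\<in>D. (\<Sum>i<d. (\<Sum>z\<in>D. \<alpha> z * p z i) * (p x i - p y i)) = 0))"

definition A_matrix :: "nat \<Rightarrow> ('a \<Rightarrow> nat \<Rightarrow> real) \<Rightarrow> 'a set \<Rightarrow> 'a \<Rightarrow> real" where
  "A_matrix d p D x = (if x \<in> D then proj_coeffs d p D x else 0)"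

definition rows_lin_indep :: "'a set \<Rightarrow> ('r \<Rightarrow> 'a \<Rightarrow> real) \<Rightarrow> 'r set \<Rightarrow> bool" where
  "rows_lin_indep V M F \<longleftrightarrow>
     (\<forall>c. (\<forall>x\<in>V. (\<Sum>r\<in>F. c r * M r x) = 0) \<longrightarrow> (\<forall>r\<in>F. c r = 0))"

definition row_matroid_rank :: "'r set \<Rightarrow> 'a set \<Rightarrow> ('r \<Rightarrow> 'a \<Rightarrow> real) \<Rightarrow> nat" where
  "row_matroid_rank E V M = Max {card F | F. F \<subseteq> E \<and> rows_lin_indep V M F}"

end

theory Submission
  imports Defs "Jordan_Normal_Form.Determinant" "HOL-Library.Function_Algebras"
begin


inductive ispoly :: "'a set \<Rightarrow> nat \<Rightarrow> (('a \<Rightarrow> nat \<Rightarrow> real) \<Rightarrow> real) \<Rightarrow> bool" for V d where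
  pconst: "ispoly V d (\<lambda>q. of_rat r)"
| pvar: "v \<in> V \<Longrightarrow> i < d \<Longrightarrow> ispoly V d (\<lambda>q. q v i)"
| padd: "ispoly V d f \<Longrightarrow> ispoly V d g \<Longrightarrow> ispoly V d (\<lambda>q. f q + g q)"
| pmult: "ispoly V d f \<Longrightarrow> ispoly V d g \<Longrightarrow> ispoly V d (\<lambda>q. f q * g q)"

definition mnm :: "('a \<times> nat \<Rightarrow> nat) \<Rightarrow> ('a \<Rightarrow> nat \<Rightarrow> real) \<Rightarrow> real" where
  "mnm m q = (\<Prod>i\<in>{i. m i \<noteq> 0}. (\<lambda>(v, l). q v l) i ^ m i)"

lemma mnm_superset:
  assumes "finite T" "{i. m i \<noteq> 0} \<subseteq> T"
  shows "mnm m q = (\<Prod>i\<in>T. (\<lambda>(v, l). q v l) i ^ m i)"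
  unfolding mnm_def
  by (rule prod.mono_neutral_left[OF assms]) auto

lemma mnm_add:
  assumes "finite {i. a i \<noteq> 0}" "finite {i. b i \<noteq> 0}"
  shows "mnm (\<lambda>i. a i + b i) q = mnm a q * mnm b q"
proof -
  let ?T = "{i. a i \<noteq> 0} \<union> {i. b i \<noteq> 0}"
  have fT: "finite ?T" using assms by auto
  have "mnm (\<lambda>i. a i + b i) q = (\<Prod>i\<in>?T. (\<lambda>(v, l). q v l) i ^ (a i + b i))"
    by (rule mnm_superset[OF fT]) auto
  also have "\<dots> = (\<Prod>i\<in>?T. (\<lambda>(v, l). q v l) i ^ a i * (\<lambda>(v, l). q v l) i ^ b i)"
    by (simp add: power_add)
  also have "\<dots> = mnm a q * mnm b q"
    by (simp add: prod.distrib mnm_superset[OF fT])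
  finally show ?thesis .
qed

definition prep :: "'a set \<Rightarrow> nat \<Rightarrow> (('a \<Rightarrow> nat \<Rightarrow> real) \<Rightarrow> real) \<Rightarrow> bool" where
  "prep V d f \<longleftrightarrow> (\<exists>M (c :: ('a \<times> nat \<Rightarrow> nat) \<Rightarrow> rat). finite M \<and>
     (\<forall>m\<in>M. finite {i. m i \<noteq> 0} \<and> {i. m i \<noteq> 0} \<subseteq> V \<times> {..<d}) \<and>
     (\<forall>q. f q = (\<Sum>m\<in>M. of_rat (c m) * mnm m q)))"

lemma prep_const: "prep V d (\<lambda>q. of_rat r)"
  unfolding prep_def
  by (rule exI[of _ "{\<lambda>_. 0}"], rule exI[of _ "\<lambda>_. r"]) (auto simp: mnm_def)

lemma prep_var: assumes "v \<in> V" "i < d" shows "prep V d (\<lambda>q. q v i)"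
  unfolding prep_def
proof (rule exI[of _ "{\<lambda>j. if j = (v,i) then 1 else 0}"], rule exI[of _ "\<lambda>_. 1"], intro conjI)
  have "{j. (if j = (v, i) then 1 else 0) \<noteq> (0::nat)} = {(v,i)}" by auto
  then show "\<forall>m\<in>{\<lambda>j. if j = (v, i) then 1 else 0}. finite {i. m i \<noteq> 0} \<and> {i. m i \<noteq> 0} \<subseteq> V \<times> {..<d}"
    using assms by auto
  show "\<forall>q. q v i = (\<Sum>m\<in>{\<lambda>j. if j = (v, i) then 1 else 0}. of_rat 1 * mnm m q)"
    using \<open>{j. (if j = (v, i) then 1 else 0) \<noteq> (0::nat)} = {(v,i)}\<close> by (simp add: mnm_def)
qed auto

lemma prep_add: assumes "prep V d f" "prep V d g" shows "prep V d (\<lambda>q. f q + g q)"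
proof -
  obtain M1 c1 where 1: "finite M1" "\<forall>m\<in>M1. finite {i. m i \<noteq> 0} \<and> {i. m i \<noteq> 0} \<subseteq> V \<times> {..<d}"
    "\<forall>q. f q = (\<Sum>m\<in>M1. of_rat (c1 m) * mnm m q)" using assms(1) unfolding prep_def by blast
  obtain M2 c2 where 2: "finite M2" "\<forall>m\<in>M2. finite {i. m i \<noteq> 0} \<and> {i. m i \<noteq> 0} \<subseteq> V \<times> {..<d}"
    "\<forall>q. g q = (\<Sum>m\<in>M2. of_rat (c2 m) * mnm m q)" using assms(2) unfolding prep_def by blast
  define c where "c m = (if m \<in> M1 then c1 m else 0) + (if m \<in> M2 then c2 m else 0)" for m
  have "f q + g q = (\<Sum>m\<in>M1 \<union> M2. of_rat (c m) * mnm m q)" for q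
  proof -
    have a: "(\<Sum>m\<in>M1 \<union> M2. of_rat (if m \<in> M1 then c1 m else 0) * mnm m q) = (\<Sum>m\<in>M1. of_rat (c1 m) * mnm m q)"
      by (rule sum.mono_neutral_cong_right) (use 1 2 in auto)
    have b: "(\<Sum>m\<in>M1 \<union> M2. of_rat (if m \<in> M2 then c2 m else 0) * mnm m q) = (\<Sum>m\<in>M2. of_rat (c2 m) * mnm m q)"
      by (rule sum.mono_neutral_cong_right) (use 1 2 in auto)
    show ?thesis unfolding c_def of_rat_add distrib_right sum.distrib a b using 1 2 by simp
  qed
  then show ?thesis unfolding prep_def using 1 2
    by (intro exI[of _ "M1 \<union> M2"] exI[of _ c]) auto
qed

lemma prep_mult: assumes "prep V d f" "prep V d g" shows "prep V d (\<lambda>q. f q * g q)"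
proof -
  obtain M1 c1 where 1: "finite M1" "\<forall>m\<in>M1. finite {i. m i \<noteq> 0} \<and> {i. m i \<noteq> 0} \<subseteq> V \<times> {..<d}"
    "\<forall>q. f q = (\<Sum>m\<in>M1. of_rat (c1 m) * mnm m q)" using assms(1) unfolding prep_def by blast
  obtain M2 c2 where 2: "finite M2" "\<forall>m\<in>M2. finite {i. m i \<noteq> 0} \<and> {i. m i \<noteq> 0} \<subseteq> V \<times> {..<d}"
    "\<forall>q. g q = (\<Sum>m\<in>M2. of_rat (c2 m) * mnm m q)" using assms(2) unfolding prep_def by blast
  define pl where "pl ab = (\<lambda>i. fst ab i + snd ab i)" for ab :: "('a \<times> nat \<Rightarrow> nat) \<times> ('a \<times> nat \<Rightarrow> nat)"
  define M where "M = pl ` (M1 \<times> M2)"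
  define c where "c m = (\<Sum>ab\<in>{ab. ab \<in> M1 \<times> M2 \<and> pl ab = m}. c1 (fst ab) * c2 (snd ab))" for m
  have fM: "finite M" unfolding M_def using 1 2 by auto
  have supp: "{i. pl ab i \<noteq> 0} \<subseteq> {i. fst ab i \<noteq> 0} \<union> {i. snd ab i \<noteq> 0}" for ab
    unfolding pl_def by auto
  have Msupp: "\<forall>m\<in>M. finite {i. m i \<noteq> 0} \<and> {i. m i \<noteq> 0} \<subseteq> V \<times> {..<d}"
  proof
    fix m assume "m \<in> M"
    then obtain ab where ab: "ab \<in> M1 \<times> M2" "m = pl ab" unfolding M_def by auto
    have s: "{i. m i \<noteq> 0} \<subseteq> {i. fst ab i \<noteq> 0} \<union> {i. snd ab i \<noteq> 0}" using supp[of ab] ab by simp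
    have "finite {i. fst ab i \<noteq> 0} \<and> {i. fst ab i \<noteq> 0} \<subseteq> V \<times> {..<d}" using ab(1) 1(2) by auto
    moreover have "finite {i. snd ab i \<noteq> 0} \<and> {i. snd ab i \<noteq> 0} \<subseteq> V \<times> {..<d}" using ab(1) 2(2) by auto
    ultimately show "finite {i. m i \<noteq> 0} \<and> {i. m i \<noteq> 0} \<subseteq> V \<times> {..<d}"
      using s by (meson finite_Un finite_subset le_sup_iff order_trans)
  qed
  have "f q * g q = (\<Sum>m\<in>M. of_rat (c m) * mnm m q)" for q
  proof -
    have "(\<Sum>m\<in>M. of_rat (c m) * mnm m q)
        = (\<Sum>m\<in>M. \<Sum>ab\<in>{ab. ab \<in> M1 \<times> M2 \<and> pl ab = m}. of_rat (c1 (fst ab)) * of_rat (c2 (snd ab)) * mnm (pl ab) q)"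
      unfolding c_def of_rat_sum sum_distrib_right of_rat_mult by (intro sum.cong refl) auto
    also have "\<dots> = (\<Sum>ab\<in>M1 \<times> M2. of_rat (c1 (fst ab)) * of_rat (c2 (snd ab)) * mnm (pl ab) q)"
      by (rule sum.group) (use 1 2 fM in \<open>auto simp: M_def\<close>)
    also have "\<dots> = (\<Sum>ab\<in>M1 \<times> M2. (of_rat (c1 (fst ab)) * mnm (fst ab) q) * (of_rat (c2 (snd ab)) * mnm (snd ab) q))"
    proof (intro sum.cong refl)
      fix ab assume "ab \<in> M1 \<times> M2"
      then have "mnm (pl ab) q = mnm (fst ab) q * mnm (snd ab) q"
        unfolding pl_def using 1(2) 2(2) by (intro mnm_add) auto
      then show "of_rat (c1 (fst ab)) * of_rat (c2 (snd ab)) * mnm (pl ab) q = (of_rat (c1 (fst ab)) * mnm (fst ab) q) * (of_rat (c2 (snd ab)) * mnm (snd ab) q)"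
        by simp
    qed
    also have "\<dots> = f q * g q"
      using 1 2 by (simp add: sum_product sum.cartesian_product split_beta)
    finally show ?thesis by simp
  qed
  then show ?thesis unfolding prep_def using fM Msupp by blast
qed

lemma ispoly_prep: "ispoly V d f \<Longrightarrow> prep V d f"
  by (induction rule: ispoly.induct) (auto intro: prep_const prep_var prep_add prep_mult)

lemma generic_poly_zero:
  assumes g: "generic_config d V p" and f: "ispoly V d f" and z: "f p = 0"
  shows "f q = 0"
proof -
  obtain M c where 1: "finite M" "\<forall>m\<in>M. finite {i. m i \<noteq> 0} \<and> {i. m i \<noteq> 0} \<subseteq> V \<times> {..<d}"
    "\<forall>q. f q = (\<Sum>m\<in>M. of_rat (c m) * mnm m q)" using ispoly_prep[OF f] unfolding prep_def by blast
  have "(\<Sum>m\<in>M. of_rat (c m) * (\<Prod>i\<in>{i. m i \<noteq> 0}. (\<lambda>(v, i). p v i) i ^ m i)) = 0"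
    using z 1(3) unfolding mnm_def by simp
  then have "\<forall>m\<in>M. c m = 0" using g 1 unfolding generic_config_def alg_indep_over_Q_def by blast
  then show ?thesis using 1(3) by simp
qed


lemma ispoly_of_int: "ispoly V d (\<lambda>q. of_int z)"
  using pconst[of V d "of_int z"] by simp

lemma ispoly_0: "ispoly V d (\<lambda>q. 0)" using ispoly_of_int[of V d 0] by simp
lemma ispoly_1: "ispoly V d (\<lambda>q. 1)" using ispoly_of_int[of V d 1] by simp

lemma ispoly_const_real_int: "c \<in> \<int> \<Longrightarrow> ispoly V d (\<lambda>q. c)"
  by (metis Ints_cases ispoly_of_int)

lemma ispoly_sum: "finite S \<Longrightarrow> (\<And>s. s \<in> S \<Longrightarrow> ispoly V d (f s)) \<Longrightarrow> ispoly V d (\<lambda>q. \<Sum>s\<in>S. f s q)"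
proof (induction S rule: finite_induct)
  case empty then show ?case by (simp add: ispoly_0)
next
  case (insert x F)
  then show ?case by (simp add: padd)
qed

lemma ispoly_prod: "finite S \<Longrightarrow> (\<And>s. s \<in> S \<Longrightarrow> ispoly V d (f s)) \<Longrightarrow> ispoly V d (\<lambda>q. \<Prod>s\<in>S. f s q)"
proof (induction S rule: finite_induct)
  case empty then show ?case by (simp add: ispoly_1)
next
  case (insert x F)
  then show ?case by (simp add: pmult)
qed

lemma ispoly_det:
  assumes "\<And>q. A q \<in> carrier_mat n n" "\<And>i j. i < n \<Longrightarrow> j < n \<Longrightarrow> ispoly V d (\<lambda>q. A q $$ (i, j))"
  shows "ispoly V d (\<lambda>q. det (A q))"
proof -
  have "ispoly V d (\<lambda>q. \<Sum>p\<in>{p. p permutes {0..<n}}. of_int (sign p) * (\<Prod>i = 0..<n. A q $$ (i, p i)))"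
  proof (rule ispoly_sum)
    show "finite {p. p permutes {0..<n}}" by (simp add: finite_permutations)
    fix p assume "p \<in> {p. p permutes {0..<n}}"
    then have "i < n \<Longrightarrow> p i < n" for i by (simp add: permutes_in_image)
    then show "ispoly V d (\<lambda>q. of_int (sign p) * (\<Prod>i = 0..<n. A q $$ (i, p i)))"
      by (intro pmult ispoly_of_int ispoly_prod) (auto intro: assms(2))
  qed
  then show ?thesis using det_def'[OF assms(1)] by simp
qed

definition enum :: "'a set \<Rightarrow> nat \<Rightarrow> 'a" where
  "enum F = (SOME h. bij_betw h {0..<card F} F)"

definition idx :: "'a set \<Rightarrow> 'a \<Rightarrow> nat" where
  "idx F = the_inv_into {0..<card F} (enum F)"

lemma enum_bij: "finite F \<Longrightarrow> bij_betw (enum F) {0..<card F} F"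
  unfolding enum_def using someI_ex[OF ex_bij_betw_nat_finite[of F]] by simp

lemma enum_in: "finite F \<Longrightarrow> i < card F \<Longrightarrow> enum F i \<in> F"
  using enum_bij bij_betwE by fastforce

lemma idx_lt: "finite F \<Longrightarrow> x \<in> F \<Longrightarrow> idx F x < card F"
  unfolding idx_def using bij_betw_the_inv_into[OF enum_bij] bij_betwE by fastforce

lemma enum_idx: "finite F \<Longrightarrow> x \<in> F \<Longrightarrow> enum F (idx F x) = x"
  unfolding idx_def using f_the_inv_into_f_bij_betw[OF enum_bij] by metis

lemma idx_enum: "finite F \<Longrightarrow> i < card F \<Longrightarrow> idx F (enum F i) = i"
  unfolding idx_def using the_inv_into_f_f[OF bij_betw_imp_inj_on[OF enum_bij]] by fastforce

lemma sum_enum: "finite F \<Longrightarrow> (\<Sum>i = 0..<card F. g (enum F i)) = (\<Sum>x\<in>F. g x)"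
  by (rule sum.reindex_bij_betw[OF enum_bij])

definition gram :: "nat \<Rightarrow> ('a \<Rightarrow> nat \<Rightarrow> real) \<Rightarrow> 'a \<Rightarrow> 'a \<Rightarrow> real" where
  "gram d q a b = (\<Sum>l<d. q a l * q b l)"

definition Bm :: "nat \<Rightarrow> ('a \<Rightarrow> nat \<Rightarrow> real) \<Rightarrow> 'a set \<Rightarrow> real mat" where
  "Bm d q F = mat (card F + 1) (card F + 1) (\<lambda>(i, j). if i < card F then
      (if j < card F then gram d q (enum F i) (enum F j) else -1) else (if j < card F then 1 else 0))"

definition rhs :: "nat \<Rightarrow> real vec" where "rhs k = unit_vec (k + 1) k"

definition solves :: "nat \<Rightarrow> ('a \<Rightarrow> nat \<Rightarrow> real) \<Rightarrow> 'a set \<Rightarrow> ('a \<Rightarrow> real) \<Rightarrow> real \<Rightarrow> bool" where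
  "solves d q F \<beta> c \<longleftrightarrow> (\<Sum>x\<in>F. \<beta> x) = 1 \<and> (\<forall>x\<in>F. (\<Sum>l<d. (\<Sum>z\<in>F. \<beta> z * q z l) * q x l) = c)"

definition zvec :: "'a set \<Rightarrow> ('a \<Rightarrow> real) \<Rightarrow> real \<Rightarrow> real vec" where
  "zvec F \<beta> c = vec (card F + 1) (\<lambda>i. if i < card F then \<beta> (enum F i) else c)"

lemma Bm_carrier[simp]: "Bm d q F \<in> carrier_mat (card F + 1) (card F + 1)"
  unfolding Bm_def by simp

lemma zvec_carrier[simp]: "zvec F \<beta> c \<in> carrier_vec (card F + 1)"
  unfolding zvec_def by simp

lemma Bm_mult:
  assumes "v \<in> carrier_vec (card F + 1)" "i < card F + 1"
  shows "(Bm d q F *\<^sub>v v) $ i = (if i < card F then (\<Sum>j = 0..<card F. gram d q (enum F i) (enum F j) * v $ j) - v $ card F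
     else (\<Sum>j = 0..<card F. v $ j))"
  using assms by (simp add: Bm_def scalar_prod_def Matrix.row_def)


lemma Bm_mult_lt:
  assumes "v \<in> carrier_vec (card F + 1)" "i < card F"
  shows "(Bm d q F *\<^sub>v v) $ i = (\<Sum>j = 0..<card F. gram d q (enum F i) (enum F j) * v $ j) - v $ card F"
  using Bm_mult[OF assms(1), of i] assms(2) by simp

lemma Bm_mult_last:
  assumes "v \<in> carrier_vec (card F + 1)"
  shows "(Bm d q F *\<^sub>v v) $ card F = (\<Sum>j = 0..<card F. v $ j)"
  using Bm_mult[OF assms(1), of "card F"] by simp

lemma rhs_lt: "i < k \<Longrightarrow> rhs k $ i = 0" by (simp add: rhs_def)
lemma rhs_last: "rhs k $ k = 1" by (simp add: rhs_def)

lemma gram_sum: "finite F \<Longrightarrow> (\<Sum>z\<in>F. gram d q x z * \<beta> z) = (\<Sum>l<d. (\<Sum>z\<in>F. \<beta> z * q z l) * q x l)"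
  unfolding gram_def sum_distrib_right
  by (subst sum.swap) (auto intro!: sum.cong simp: mult_ac)

lemma Bm_solves:
  assumes fin: "finite F" and s: "solves d q F \<beta> c"
  shows "Bm d q F *\<^sub>v zvec F \<beta> c = rhs (card F)"
proof (rule eq_vecI)
  show "dim_vec (Bm d q F *\<^sub>v zvec F \<beta> c) = dim_vec (rhs (card F))" by (simp add: rhs_def Bm_def)
  fix i assume "i < dim_vec (rhs (card F))"
  then have i: "i < card F + 1" by (simp add: rhs_def)
  show "(Bm d q F *\<^sub>v zvec F \<beta> c) $ i = rhs (card F) $ i"
  proof (cases "i < card F")
    case True
    have "(\<Sum>j = 0..<card F. gram d q (enum F i) (enum F j) * zvec F \<beta> c $ j)
       = (\<Sum>j = 0..<card F. gram d q (enum F i) (enum F j) * \<beta> (enum F j))"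
      by (intro sum.cong) (auto simp: zvec_def)
    also have "\<dots> = (\<Sum>z\<in>F. gram d q (enum F i) z * \<beta> z)" by (rule sum_enum[OF fin])
    also have "\<dots> = c" using s enum_in[OF fin True] unfolding solves_def gram_sum[OF fin] by auto
    finally show ?thesis using True i by (simp add: Bm_mult rhs_def zvec_def)
  next
    case False
    then have ik: "i = card F" using i by simp
    have "(\<Sum>j = 0..<card F. zvec F \<beta> c $ j) = (\<Sum>j = 0..<card F. \<beta> (enum F j))"
      by (intro sum.cong) (auto simp: zvec_def)
    also have "\<dots> = 1" using s sum_enum[OF fin, of \<beta>] unfolding solves_def by simp
    moreover have "(Bm d q F *\<^sub>v zvec F \<beta> c) $ card F = (\<Sum>j = 0..<card F. zvec F \<beta> c $ j)"
      using Bm_mult[OF zvec_carrier, of "card F" F d q] by simp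
    ultimately show ?thesis using ik by (simp add: rhs_def)
  qed
qed

lemma cramer_solves:
  assumes fin: "finite F" and s: "solves d q F \<beta> c" and x: "x \<in> F"
  shows "det (replace_col (Bm d q F) (rhs (card F)) (idx F x)) = \<beta> x * det (Bm d q F)"
proof -
  have "det (replace_col (Bm d q F) (Bm d q F *\<^sub>v zvec F \<beta> c) (idx F x)) = zvec F \<beta> c $ idx F x * det (Bm d q F)"
    by (rule cramer_lemma_mat[OF Bm_carrier zvec_carrier]) (use idx_lt[OF fin x] in auto)
  then show ?thesis using Bm_solves[OF fin s] idx_lt[OF fin x] enum_idx[OF fin x] by (simp add: zvec_def)
qed


lemma ispoly_gram: "a \<in> V \<Longrightarrow> b \<in> V \<Longrightarrow> ispoly V d (\<lambda>q. gram d q a b)"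
  unfolding gram_def by (intro ispoly_sum) (auto intro: pmult pvar)

lemma ispoly_Bm_entry:
  assumes "finite F" "F \<subseteq> V" "i < card F + 1" "j < card F + 1"
  shows "ispoly V d (\<lambda>q. Bm d q F $$ (i, j))"
proof -
  have "ispoly V d (\<lambda>q. if i < card F then (if j < card F then gram d q (enum F i) (enum F j) else -1)
      else (if j < card F then 1 else 0))"
  proof (cases "i < card F \<and> j < card F")
    case True
    then have "enum F i \<in> V" "enum F j \<in> V" using assms enum_in[OF assms(1)] by auto
    then show ?thesis using True by (simp add: ispoly_gram)
  next
    case False
    show ?thesis
    proof (cases "i < card F")
      case True
      then have "\<not> j < card F" using False by simp
      then show ?thesis using True by (simp add: ispoly_const_real_int)
    next
      case False
      then show ?thesis by (cases "j < card F") (simp_all add: ispoly_const_real_int)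
    qed
  qed
  then show ?thesis using assms(3,4) by (simp add: Bm_def)
qed

lemma ispoly_det_Bm: "finite F \<Longrightarrow> F \<subseteq> V \<Longrightarrow> ispoly V d (\<lambda>q. det (Bm d q F))"
  by (rule ispoly_det[OF Bm_carrier]) (rule ispoly_Bm_entry; simp)

lemma replace_col_entry:
  "A \<in> carrier_mat n n \<Longrightarrow> i < n \<Longrightarrow> j < n \<Longrightarrow> replace_col A b t $$ (i, j) = (if j = t then b $ i else A $$ (i, j))"
  by (simp add: replace_col_def)

lemma ispoly_det_Bm_col: "finite F \<Longrightarrow> F \<subseteq> V \<Longrightarrow> ispoly V d (\<lambda>q. det (replace_col (Bm d q F) (rhs (card F)) t))"
proof (rule ispoly_det)
  show "replace_col (Bm d q F) (rhs (card F)) t \<in> carrier_mat (card F + 1) (card F + 1)" for q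
    by (simp add: replace_col_def Bm_def)
  fix i j assume a: "finite F" "F \<subseteq> V" "i < card F + 1" "j < card F + 1"
  show "ispoly V d (\<lambda>q. replace_col (Bm d q F) (rhs (card F)) t $$ (i, j))"
  proof (cases "j = t")
    case True
    have "ispoly V d (\<lambda>q. rhs (card F) $ i)" using a(3) by (simp add: rhs_def ispoly_const_real_int)
    then show ?thesis using True a by (simp add: replace_col_entry[OF Bm_carrier])
  next
    case False
    then show ?thesis using a by (simp add: replace_col_entry[OF Bm_carrier] ispoly_Bm_entry)
  qed
qed

lemma solves_of_vec:
  assumes fin: "finite F" and z: "z \<in> carrier_vec (card F + 1)" and e: "Bm d q F *\<^sub>v z = rhs (card F)"
  shows "solves d q F (\<lambda>x. z $ idx F x) (z $ card F)"
proof -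
  have comp: "(Bm d q F *\<^sub>v z) $ i = rhs (card F) $ i" for i using e by simp
  have zj: "(\<Sum>j = 0..<card F. g j * z $ j) = (\<Sum>x\<in>F. g (idx F x) * z $ idx F x)" for g
  proof -
    have "(\<Sum>x\<in>F. g (idx F x) * z $ idx F x) = (\<Sum>j = 0..<card F. g (idx F (enum F j)) * z $ idx F (enum F j))"
      by (rule sum_enum[OF fin, symmetric])
    also have "\<dots> = (\<Sum>j = 0..<card F. g j * z $ j)" by (rule sum.cong) (auto simp: idx_enum[OF fin])
    finally show ?thesis by simp
  qed
  have gx: "(\<Sum>j = 0..<card F. gram d q x (enum F j) * z $ j) = (\<Sum>y\<in>F. gram d q x y * z $ idx F y)" for x
  proof -
    have "(\<Sum>j = 0..<card F. gram d q x (enum F j) * z $ j) = (\<Sum>y\<in>F. gram d q x (enum F (idx F y)) * z $ idx F y)"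
      by (rule zj[of "\<lambda>j. gram d q x (enum F j)"])
    also have "\<dots> = (\<Sum>y\<in>F. gram d q x y * z $ idx F y)" by (rule sum.cong) (simp_all add: enum_idx[OF fin])
    finally show ?thesis .
  qed
  have "(\<Sum>j = 0..<card F. z $ j) = 1"
    using comp[of "card F"] unfolding Bm_mult_last[OF z] rhs_last .
  then have s1: "(\<Sum>x\<in>F. z $ idx F x) = 1" using zj[of "\<lambda>_. 1"] by simp
  have s2: "(\<Sum>l<d. (\<Sum>y\<in>F. z $ idx F y * q y l) * q x l) = z $ card F" if x: "x \<in> F" for x
  proof -
    have i: "idx F x < card F" using idx_lt[OF fin x] .
    have "(\<Sum>j = 0..<card F. gram d q (enum F (idx F x)) (enum F j) * z $ j) - z $ card F = 0"
      using comp[of "idx F x"] unfolding Bm_mult_lt[OF z i] rhs_lt[OF i] .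
    then have "(\<Sum>y\<in>F. gram d q x y * z $ idx F y) = z $ card F"
      using gx[of x] enum_idx[OF fin x] by simp
    then show ?thesis using gram_sum[OF fin, of d q x "\<lambda>y. z $ idx F y"] by simp
  qed
  show ?thesis unfolding solves_def using s1 s2 by auto
qed

lemma det_nz_kernel:
  assumes "A \<in> carrier_mat n n" "det A \<noteq> (0::real)" "v \<in> carrier_vec n" "A *\<^sub>v v = 0\<^sub>v n"
  shows "v = 0\<^sub>v n"
proof (rule ccontr)
  assume "v \<noteq> 0\<^sub>v n"
  then have "det A = 0" using det_0_iff_vec_prod_zero[OF assms(1)] assms(3,4) by blast
  then show False using assms(2) by simp
qed

lemma solves_unique:
  assumes fin: "finite F" and dt: "det (Bm d q F) \<noteq> 0"
    and s1: "solves d q F \<beta>1 c1" and s2: "solves d q F \<beta>2 c2" and x: "x \<in> F"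
  shows "\<beta>1 x = \<beta>2 x"
proof -
  let ?B = "Bm d q F" and ?n = "card F + 1"
  have "?B *\<^sub>v (zvec F \<beta>1 c1 - zvec F \<beta>2 c2) = ?B *\<^sub>v zvec F \<beta>1 c1 - ?B *\<^sub>v zvec F \<beta>2 c2"
    by (rule mult_minus_distrib_mat_vec[OF Bm_carrier zvec_carrier zvec_carrier])
  also have "\<dots> = rhs (card F) - rhs (card F)" by (simp only: Bm_solves[OF fin s1] Bm_solves[OF fin s2])
  also have "\<dots> = 0\<^sub>v ?n" by (rule minus_cancel_vec) (simp add: rhs_def)
  finally have k0: "?B *\<^sub>v (zvec F \<beta>1 c1 - zvec F \<beta>2 c2) = 0\<^sub>v ?n" .
  have "zvec F \<beta>1 c1 - zvec F \<beta>2 c2 = 0\<^sub>v ?n"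
    by (rule det_nz_kernel[OF Bm_carrier dt minus_carrier_vec[OF zvec_carrier zvec_carrier] k0])
  then have "(zvec F \<beta>1 c1 - zvec F \<beta>2 c2) $ idx F x = 0" using idx_lt[OF fin x] by simp
  then show ?thesis using idx_lt[OF fin x] enum_idx[OF fin x] by (simp add: zvec_def)
qed

lemma Bm_det_nz:
  assumes fin: "finite F" and k: "card F \<ge> 1"
    and aff: "\<And>\<beta>. (\<Sum>x\<in>F. \<beta> x) = 0 \<Longrightarrow> (\<forall>l<d. (\<Sum>x\<in>F. \<beta> x * q x l) = 0) \<Longrightarrow> (\<forall>x\<in>F. \<beta> x = 0)"
  shows "det (Bm d q F) \<noteq> 0"
proof
  assume "det (Bm d q F) = 0"
  then obtain v where v: "v \<in> carrier_vec (card F + 1)" "v \<noteq> 0\<^sub>v (card F + 1)" "Bm d q F *\<^sub>v v = 0\<^sub>v (card F + 1)"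
    using det_0_iff_vec_prod_zero[OF Bm_carrier] by blast
  define \<beta> where "\<beta> x = v $ idx F x" for x
  have comp: "(Bm d q F *\<^sub>v v) $ i = 0" if "i < card F + 1" for i using v(3) that by simp
  have zj: "(\<Sum>j = 0..<card F. g j * v $ j) = (\<Sum>x\<in>F. g (idx F x) * \<beta> x)" for g
  proof -
    have "(\<Sum>x\<in>F. g (idx F x) * v $ idx F x) = (\<Sum>j = 0..<card F. g (idx F (enum F j)) * v $ idx F (enum F j))"
      by (rule sum_enum[OF fin, symmetric])
    also have "\<dots> = (\<Sum>j = 0..<card F. g j * v $ j)" by (rule sum.cong) (auto simp: idx_enum[OF fin])
    finally show ?thesis unfolding \<beta>_def by simp
  qed
  have gx: "(\<Sum>j = 0..<card F. gram d q x (enum F j) * v $ j) = (\<Sum>y\<in>F. gram d q x y * \<beta> y)" for x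
  proof -
    have "(\<Sum>j = 0..<card F. gram d q x (enum F j) * v $ j) = (\<Sum>y\<in>F. gram d q x (enum F (idx F y)) * \<beta> y)"
      by (rule zj[of "\<lambda>j. gram d q x (enum F j)"])
    also have "\<dots> = (\<Sum>y\<in>F. gram d q x y * \<beta> y)" by (rule sum.cong) (simp_all add: enum_idx[OF fin])
    finally show ?thesis .
  qed
  have "(\<Sum>j = 0..<card F. v $ j) = 0"
    using comp[of "card F"] unfolding Bm_mult_last[OF v(1)] by simp
  then have s1: "(\<Sum>x\<in>F. \<beta> x) = 0" using zj[of "\<lambda>_. 1"] by simp
  have s2: "(\<Sum>y\<in>F. gram d q x y * \<beta> y) = v $ card F" if x: "x \<in> F" for x
  proof -
    have i: "idx F x < card F" using idx_lt[OF fin x] .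
    have "(\<Sum>j = 0..<card F. gram d q (enum F (idx F x)) (enum F j) * v $ j) - v $ card F = 0"
      using comp[of "idx F x"] i unfolding Bm_mult_lt[OF v(1) i] by simp
    then show ?thesis
      using gx[of x] enum_idx[OF fin x] by simp
  qed
  have "(\<Sum>x\<in>F. \<beta> x * (\<Sum>y\<in>F. gram d q x y * \<beta> y)) = (\<Sum>x\<in>F. \<beta> x * v $ card F)"
    by (rule sum.cong) (simp_all add: s2)
  also have "\<dots> = (\<Sum>x\<in>F. \<beta> x) * v $ card F" by (rule sum_distrib_right[symmetric])
  finally have "(\<Sum>x\<in>F. \<beta> x * (\<Sum>y\<in>F. gram d q x y * \<beta> y)) = 0" using s1 by simp
  moreover have "(\<Sum>x\<in>F. \<beta> x * (\<Sum>y\<in>F. gram d q x y * \<beta> y)) = (\<Sum>l<d. (\<Sum>x\<in>F. \<beta> x * q x l)^2)"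
  proof -
    have "(\<Sum>x\<in>F. \<beta> x * (\<Sum>y\<in>F. gram d q x y * \<beta> y))
        = (\<Sum>x\<in>F. \<Sum>l<d. \<beta> x * ((\<Sum>y\<in>F. \<beta> y * q y l) * q x l))"
      unfolding gram_sum[OF fin] by (simp only: sum_distrib_left)
    also have "\<dots> = (\<Sum>l<d. \<Sum>x\<in>F. \<beta> x * ((\<Sum>y\<in>F. \<beta> y * q y l) * q x l))"
      by (rule sum.swap)
    also have "\<dots> = (\<Sum>l<d. (\<Sum>y\<in>F. \<beta> y * q y l) * (\<Sum>x\<in>F. \<beta> x * q x l))"
    proof (intro sum.cong refl)
      fix l
      have "(\<Sum>x\<in>F. \<beta> x * ((\<Sum>y\<in>F. \<beta> y * q y l) * q x l)) = (\<Sum>x\<in>F. (\<Sum>y\<in>F. \<beta> y * q y l) * (\<beta> x * q x l))"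
        by (rule sum.cong) (simp_all add: mult_ac)
      then show "(\<Sum>x\<in>F. \<beta> x * ((\<Sum>y\<in>F. \<beta> y * q y l) * q x l)) = (\<Sum>y\<in>F. \<beta> y * q y l) * (\<Sum>x\<in>F. \<beta> x * q x l)"
        by (simp only: sum_distrib_left)
    qed
    finally show ?thesis by (simp only: power2_eq_square)
  qed
  ultimately have "(\<Sum>l<d. (\<Sum>x\<in>F. \<beta> x * q x l)^2) = 0" by simp
  then have "\<forall>l<d. (\<Sum>x\<in>F. \<beta> x * q x l) = 0"
    by (subst (asm) sum_nonneg_eq_0_iff) auto
  then have b0: "\<forall>x\<in>F. \<beta> x = 0" using aff s1 by blast
  have vj: "v $ j = 0" if "j < card F" for j
    using b0 enum_in[OF fin that] idx_enum[OF fin that] unfolding \<beta>_def by metis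
  have "v $ card F = 0"
    using s2[OF enum_in[OF fin, of 0]] k b0 by simp
  then have "v = 0\<^sub>v (card F + 1)"
    using vj v(1) by (intro eq_vecI) (auto simp: less_Suc_eq)
  then show False using v(2) by simp
qed

definition projP :: "nat \<Rightarrow> ('a \<Rightarrow> nat \<Rightarrow> real) \<Rightarrow> 'a set \<Rightarrow> ('a \<Rightarrow> real) \<Rightarrow> bool" where
  "projP d p D \<alpha> \<longleftrightarrow> (\<forall>x. x \<notin> D \<longrightarrow> \<alpha> x = 0) \<and> (\<Sum>x\<in>D. \<alpha> x) = 1 \<and>
      (\<forall>x\<in>D. \<forall>y\<in>D. (\<Sum>i<d. (\<Sum>z\<in>D. \<alpha> z * p z i) * (p x i - p y i)) = 0)"

lemma projP_iff:
  assumes "F \<noteq> {}"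
  shows "projP d q F \<alpha> \<longleftrightarrow> (\<forall>x. x \<notin> F \<longrightarrow> \<alpha> x = 0) \<and> (\<exists>c. solves d q F \<alpha> c)"
proof -
  obtain x0 where x0: "x0 \<in> F" using assms by auto
  let ?Q = "\<lambda>x. (\<Sum>i<d. (\<Sum>z\<in>F. \<alpha> z * q z i) * q x i)"
  have diff: "(\<Sum>i<d. (\<Sum>z\<in>F. \<alpha> z * q z i) * (q x i - q y i)) = ?Q x - ?Q y" for x y
    unfolding right_diff_distrib by (rule sum_subtractf)
  have eq: "(\<forall>x\<in>F. \<forall>y\<in>F. ?Q x - ?Q y = 0) \<longleftrightarrow> (\<exists>c. \<forall>x\<in>F. ?Q x = c)"
  proof
    assume a: "\<forall>x\<in>F. \<forall>y\<in>F. ?Q x - ?Q y = 0"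
    have "\<forall>x\<in>F. ?Q x = ?Q x0"
    proof
      fix x assume "x \<in> F" then have "?Q x - ?Q x0 = 0" using a x0 by blast
      then show "?Q x = ?Q x0" by simp
    qed
    then show "\<exists>c. \<forall>x\<in>F. ?Q x = c" by blast
  next
    assume "\<exists>c. \<forall>x\<in>F. ?Q x = c"
    then obtain c where "\<forall>x\<in>F. ?Q x = c" by blast
    then show "\<forall>x\<in>F. \<forall>y\<in>F. ?Q x - ?Q y = 0" by simp
  qed
  show ?thesis
    unfolding projP_def solves_def diff eq by blast
qed


lemma proj_coeffs_solves:
  assumes fin: "finite F" and k: "card F \<ge> 1" and dt: "det (Bm d q F) \<noteq> 0"
  shows "(\<forall>x. x \<notin> F \<longrightarrow> proj_coeffs d q F x = 0) \<and> (\<exists>c. solves d q F (proj_coeffs d q F) c)"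
proof -
  have ne: "F \<noteq> {}" using k by auto
  let ?B = "Bm d q F" and ?n = "card F + 1"
  obtain Bi where Bi: "Bi \<in> carrier_mat ?n ?n" "?B * Bi = 1\<^sub>m ?n"
    using det_non_zero_imp_unit[OF Bm_carrier dt, of undefined]
    unfolding Units_def by (auto simp: ring_mat_simps)
  define z where "z = Bi *\<^sub>v rhs (card F)"
  have zc: "z \<in> carrier_vec ?n" unfolding z_def using Bi by (simp add: rhs_def)
  have "?B *\<^sub>v z = (?B * Bi) *\<^sub>v rhs (card F)"
    unfolding z_def by (rule assoc_mult_mat_vec[symmetric, OF Bm_carrier Bi(1)]) (simp add: rhs_def)
  then have ez: "?B *\<^sub>v z = rhs (card F)" using Bi by (simp add: rhs_def)
  define \<alpha> where "\<alpha> x = (if x \<in> F then z $ idx F x else 0)" for x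
  have "solves d q F (\<lambda>x. z $ idx F x) (z $ card F)" by (rule solves_of_vec[OF fin zc ez])
  then have "solves d q F \<alpha> (z $ card F)" unfolding solves_def \<alpha>_def by simp
  then have P\<alpha>: "projP d q F \<alpha>" using projP_iff[OF ne] unfolding \<alpha>_def by auto
  have uniq: "\<beta> = \<alpha>" if "projP d q F \<beta>" for \<beta>
  proof
    fix x
    show "\<beta> x = \<alpha> x"
    proof (cases "x \<in> F")
      case True
      have "\<exists>c. solves d q F \<beta> c" using that projP_iff[OF ne] by simp
      moreover have "\<exists>c. solves d q F \<alpha> c" using P\<alpha> projP_iff[OF ne] by simp
      ultimately obtain c1 c2 where s1: "solves d q F \<beta> c1" and s2: "solves d q F \<alpha> c2" by blast
      show ?thesis by (rule solves_unique[OF fin dt s1 s2 True])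
    next
      case False
      have "\<beta> x = 0" using that False unfolding projP_def by blast
      moreover have "\<alpha> x = 0" using False unfolding \<alpha>_def by simp
      ultimately show ?thesis by simp
    qed
  qed
  have th: "(THE \<beta>. projP d q F \<beta>) = \<alpha>" by (rule the_equality[of "projP d q F" \<alpha>, OF P\<alpha> uniq])
  have pc: "proj_coeffs d q F = \<alpha>"
    unfolding proj_coeffs_def projP_def[symmetric] by (rule th)
  have "(\<forall>x. x \<notin> F \<longrightarrow> \<alpha> x = 0) \<and> (\<exists>c. solves d q F \<alpha> c)" using P\<alpha> projP_iff[OF ne] by simp
  then show ?thesis unfolding pc .
qed


definition wit1 :: "'a set \<Rightarrow> 'a \<Rightarrow> nat \<Rightarrow> real" where
  "wit1 F v l = (if v \<in> F \<and> l = idx F v then 1 else 0)"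

lemma wit1_sum_l:
  assumes fin: "finite F" and x: "x \<in> F" and d: "idx F x < d"
  shows "(\<Sum>l<d. h l * wit1 F x l) = h (idx F x)"
proof -
  have "(\<Sum>l<d. h l * wit1 F x l) = (\<Sum>l<d. if l = idx F x then h l else 0)"
    by (rule sum.cong) (simp_all add: wit1_def x)
  also have "\<dots> = h (idx F x)" using d by (simp add: sum.delta)
  finally show ?thesis .
qed

lemma wit1_sum_z:
  assumes fin: "finite F" and l: "l < card F"
  shows "(\<Sum>z\<in>F. \<beta> z * wit1 F z l) = \<beta> (enum F l)"
proof -
  have "(\<Sum>z\<in>F. \<beta> z * wit1 F z l) = (\<Sum>z\<in>F. if z = enum F l then \<beta> z else 0)"
  proof (rule sum.cong)
    fix z assume z: "z \<in> F"
    have "(l = idx F z) \<longleftrightarrow> (z = enum F l)"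
      using enum_idx[OF fin z] idx_enum[OF fin l] by metis
    then show "\<beta> z * wit1 F z l = (if z = enum F l then \<beta> z else 0)"
      using z by (simp add: wit1_def)
  qed simp
  also have "\<dots> = \<beta> (enum F l)" using enum_in[OF fin l] fin by (simp add: sum.delta)
  finally show ?thesis .
qed

lemma wit1_det_nz:
  assumes fin: "finite F" and k: "card F \<ge> 1" and kd: "card F \<le> d"
  shows "det (Bm d (wit1 F) F) \<noteq> 0"
proof (rule Bm_det_nz[OF fin k])
  fix \<beta> :: "'a \<Rightarrow> real"
  assume h: "\<forall>l<d. (\<Sum>x\<in>F. \<beta> x * wit1 F x l) = 0"
  show "\<forall>x\<in>F. \<beta> x = 0"
  proof
    fix x assume x: "x \<in> F"
    have i: "idx F x < card F" by (rule idx_lt[OF fin x])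
    then have "(\<Sum>z\<in>F. \<beta> z * wit1 F z (idx F x)) = 0" using h kd by simp
    then show "\<beta> x = 0" unfolding wit1_sum_z[OF fin i] enum_idx[OF fin x] .
  qed
qed

lemma wit1_solves:
  assumes fin: "finite F" and k: "card F \<ge> 1" and kd: "card F \<le> d"
  shows "solves d (wit1 F) F (\<lambda>_. 1 / card F) (1 / card F)"
  unfolding solves_def
proof
  show "(\<Sum>x\<in>F. 1 / real (card F)) = 1" using k by simp
  show "\<forall>x\<in>F. (\<Sum>l<d. (\<Sum>z\<in>F. 1 / real (card F) * wit1 F z l) * wit1 F x l) = 1 / real (card F)"
  proof
    fix x assume x: "x \<in> F"
    have i: "idx F x < card F" by (rule idx_lt[OF fin x])
    have "(\<Sum>l<d. (\<Sum>z\<in>F. 1 / real (card F) * wit1 F z l) * wit1 F x l)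
        = (\<Sum>z\<in>F. 1 / real (card F) * wit1 F z (idx F x))"
      by (rule wit1_sum_l[OF fin x]) (use i kd in simp)
    also have "\<dots> = 1 / real (card F)" by (rule wit1_sum_z[OF fin i])
    finally show "(\<Sum>l<d. (\<Sum>z\<in>F. 1 / real (card F) * wit1 F z l) * wit1 F x l) = 1 / real (card F)" .
  qed
qed

lemma generic_det_nz:
  assumes g: "generic_config d V p" and fin: "finite F" and FV: "F \<subseteq> V"
    and k: "card F \<ge> 1" and kd: "card F \<le> d"
  shows "det (Bm d p F) \<noteq> 0"
proof
  assume "det (Bm d p F) = 0"
  then have "det (Bm d (wit1 F) F) = 0"
    by (rule generic_poly_zero[OF g ispoly_det_Bm[OF fin FV], where q = "wit1 F"])
  then show False using wit1_det_nz[OF fin k kd] by simp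
qed

lemma generic_alpha_nz:
  assumes g: "generic_config d V p" and fin: "finite F" and FV: "F \<subseteq> V"
    and k: "card F \<ge> 1" and kd: "card F \<le> d" and y: "y \<in> F"
  shows "proj_coeffs d p F y \<noteq> 0"
proof
  assume a0: "proj_coeffs d p F y = 0"
  have dp: "det (Bm d p F) \<noteq> 0" by (rule generic_det_nz[OF g fin FV k kd])
  obtain c where c: "solves d p F (proj_coeffs d p F) c" using proj_coeffs_solves[OF fin k dp] by blast
  have "det (replace_col (Bm d p F) (rhs (card F)) (idx F y)) = 0"
    using cramer_solves[OF fin c y] a0 by simp
  then have "det (replace_col (Bm d (wit1 F) F) (rhs (card F)) (idx F y)) = 0"
    by (rule generic_poly_zero[OF g ispoly_det_Bm_col[OF fin FV], where q = "wit1 F"])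
  moreover have "det (replace_col (Bm d (wit1 F) F) (rhs (card F)) (idx F y)) = 1 / card F * det (Bm d (wit1 F) F)"
    by (rule cramer_solves[OF fin wit1_solves[OF fin k kd] y])
  ultimately show False using wit1_det_nz[OF fin k kd] k by simp
qed


lemma mat_row_scale:
  assumes A: "A \<in> carrier_mat n n" and B: "B \<in> carrier_mat n n"
    and e: "\<And>m j. m < n \<Longrightarrow> j < n \<Longrightarrow> A $$ (m, j) = r m * B $$ (m, j)"
    and v: "v \<in> carrier_vec n" and m: "m < n"
  shows "(A *\<^sub>v v) $ m = r m * (B *\<^sub>v v) $ m"
proof -
  have "(A *\<^sub>v v) $ m = (\<Sum>j = 0..<n. A $$ (m, j) * v $ j)"
    using A v m by (simp add: scalar_prod_def Matrix.row_def)
  also have "\<dots> = (\<Sum>j = 0..<n. r m * (B $$ (m, j) * v $ j))"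
    by (rule sum.cong) (simp_all add: e m mult.assoc)
  also have "\<dots> = r m * (\<Sum>j = 0..<n. B $$ (m, j) * v $ j)" by (rule sum_distrib_left[symmetric])
  also have "(\<Sum>j = 0..<n. B $$ (m, j) * v $ j) = (B *\<^sub>v v) $ m"
    using B v m by (simp add: scalar_prod_def Matrix.row_def)
  finally show ?thesis .
qed

definition Yw :: "nat \<Rightarrow> nat \<Rightarrow> nat \<Rightarrow> real" where
  "Yw k j l = (if j < k then (if l = j then 1 else 0) else (if l < k then -1 else 0))"

definition wit2 :: "'a set \<Rightarrow> nat \<Rightarrow> 'a \<Rightarrow> nat \<Rightarrow> real" where
  "wit2 S k v l = (if v \<in> S then Yw k (idx S v) l else 0)"

definition bw :: "nat \<Rightarrow> nat \<Rightarrow> nat \<Rightarrow> real" where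
  "bw k m j = (if m = k then 1 / real k else if j = k then real k / (real k ^ 2 + real k - 1)
     else (real k + 1) / (real k ^ 2 + real k - 1))"

lemma sumY:
  assumes m: "m \<le> k" and l: "l < k"
  shows "(\<Sum>j\<in>{0..<k+1} - {m}. f j * Yw k j l) = (if l \<noteq> m then f l else 0) - (if m \<noteq> k then f k else 0)"
proof -
  have s1: "(\<Sum>j\<in>{0..<k} - {m}. f j * Yw k j l) = (if l \<noteq> m then f l else 0)"
  proof -
    have "(\<Sum>j\<in>{0..<k} - {m}. f j * Yw k j l) = (\<Sum>j\<in>{0..<k} - {m}. if j = l then f j else 0)"
      by (rule sum.cong) (auto simp: Yw_def)
    also have "\<dots> = (if l \<noteq> m then f l else 0)" using l by (simp add: sum.delta')
    finally show ?thesis .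
  qed
  show ?thesis
  proof (cases "m = k")
    case True
    then have "{0..<k+1} - {m} = {0..<k} - {m}" by auto
    then show ?thesis using s1 True l by simp
  next
    case False
    then have e: "{0..<k+1} - {m} = insert k ({0..<k} - {m})" using m by auto
    have "(\<Sum>j\<in>{0..<k+1} - {m}. f j * Yw k j l) = f k * Yw k k l + (\<Sum>j\<in>{0..<k} - {m}. f j * Yw k j l)"
      unfolding e by (rule sum.insert) auto
    then show ?thesis using s1 False l by (simp add: Yw_def)
  qed
qed

lemma sumQ_j:
  assumes "j < k" "k \<le> d"
  shows "(\<Sum>l<d. Q l * Yw k j l) = Q j"
proof -
  have "(\<Sum>l<d. Q l * Yw k j l) = (\<Sum>l<d. if l = j then Q l else 0)"
    by (rule sum.cong) (auto simp: Yw_def assms)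
  also have "\<dots> = Q j" using assms by (simp add: sum.delta)
  finally show ?thesis .
qed

lemma sumQ_k:
  assumes "k \<le> d"
  shows "(\<Sum>l<d. Q l * Yw k k l) = - (\<Sum>l<k. Q l)"
proof -
  have "(\<Sum>l<d. Q l * Yw k k l) = (\<Sum>l<d. if l \<in> {..<k} then - Q l else 0)"
    by (rule sum.cong) (auto simp: Yw_def)
  also have "\<dots> = (\<Sum>l\<in>{..<d} \<inter> {..<k}. - Q l)" by (rule sum.inter_restrict[symmetric]) simp
  also have "{..<d} \<inter> {..<k} = {..<k}" using assms by auto
  finally show ?thesis by (simp add: sum_negf)
qed

locale simplex_setup =
  fixes S :: "'a set" and k :: nat
  assumes finS: "finite S" and cardS: "card S = k + 1" and k1: "k \<ge> 1"
begin

abbreviation "s \<equiv> enum S"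
definition face :: "nat \<Rightarrow> 'a set" where "face m = S - {s m}"

lemma s_in: "j < k + 1 \<Longrightarrow> s j \<in> S" using enum_in[OF finS] cardS by simp

lemma s_inj: "i < k + 1 \<Longrightarrow> j < k + 1 \<Longrightarrow> s i = s j \<Longrightarrow> i = j"
  using idx_enum[OF finS] cardS by metis

lemma idx_s: "j < k + 1 \<Longrightarrow> idx S (s j) = j" using idx_enum[OF finS] cardS by simp

lemma S_eq: "S = s ` {0..<k+1}"
  using bij_betw_imp_surj_on[OF enum_bij[OF finS]] cardS by simp

lemma face_eq: "m < k + 1 \<Longrightarrow> face m = s ` ({0..<k+1} - {m})"
  unfolding face_def using s_inj by (subst S_eq) auto

lemma finite_face: "finite (face m)" unfolding face_def using finS by simp

lemma face_sub: "face m \<subseteq> S" unfolding face_def by auto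

lemma card_face: "m < k + 1 \<Longrightarrow> card (face m) = k"
  unfolding face_def using s_in[of m] finS cardS by simp

lemma s_in_face: "m < k + 1 \<Longrightarrow> j < k + 1 \<Longrightarrow> s j \<in> face m \<longleftrightarrow> j \<noteq> m"
  unfolding face_def using s_in s_inj by blast

lemma sum_face:
  assumes m: "m < k + 1"
  shows "(\<Sum>x\<in>face m. g x) = (\<Sum>j\<in>{0..<k+1} - {m}. g (s j))"
proof -
  have "inj_on s ({0..<k+1} - {m})" using s_inj by (intro inj_onI) auto
  then show ?thesis unfolding face_eq[OF m] by (rule sum.reindex[unfolded comp_def])
qed

lemma face_elem: "m < k + 1 \<Longrightarrow> x \<in> face m \<Longrightarrow> \<exists>j. j < k + 1 \<and> j \<noteq> m \<and> x = s j"
  using face_eq by auto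

lemma wit2_s: "j < k + 1 \<Longrightarrow> wit2 S k (s j) l = Yw k j l"
  unfolding wit2_def using s_in idx_s by simp

lemma D_pos: "real k ^ 2 + real k - 1 > 0"
proof -
  have "real k \<ge> 1" using k1 by simp
  then have "real k ^ 2 \<ge> 1" by (simp add: one_le_power)
  then show ?thesis using \<open>real k \<ge> 1\<close> by linarith
qed

lemma wit2_det_nz:
  assumes m: "m < k + 1" and kd: "k \<le> d"
  shows "det (Bm d (wit2 S k) (face m)) \<noteq> 0"
proof (rule Bm_det_nz[OF finite_face])
  show "1 \<le> card (face m)" using card_face[OF m] k1 by simp
  fix \<beta> :: "'a \<Rightarrow> real"
  assume h: "\<forall>l<d. (\<Sum>x\<in>face m. \<beta> x * wit2 S k x l) = 0"
  have h2: "(\<Sum>j\<in>{0..<k+1} - {m}. \<beta> (s j) * Yw k j l) = 0" if "l < k" for l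
  proof -
    have "(\<Sum>x\<in>face m. \<beta> x * wit2 S k x l) = 0" using h that kd by simp
    moreover have "(\<Sum>x\<in>face m. \<beta> x * wit2 S k x l) = (\<Sum>j\<in>{0..<k+1} - {m}. \<beta> (s j) * Yw k j l)"
      unfolding sum_face[OF m] by (rule sum.cong) (auto simp: wit2_s)
    ultimately show ?thesis by simp
  qed
  have hs: "(if l \<noteq> m then \<beta> (s l) else 0) - (if m \<noteq> k then \<beta> (s k) else 0) = 0" if "l < k" for l
    using h2[OF that] sumY[of m k l "\<lambda>j. \<beta> (s j)"] m that by simp
  have bk: "m \<noteq> k \<Longrightarrow> \<beta> (s k) = 0" using hs[of m] m by simp
  have bj: "\<beta> (s j) = 0" if "j < k + 1" "j \<noteq> m" for j
  proof (cases "j = k")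
    case True then show ?thesis using bk that by simp
  next
    case False
    then have "j < k" using that by simp
    then show ?thesis using hs[of j] that bk by (cases "m = k") simp_all
  qed
  show "\<forall>x\<in>face m. \<beta> x = 0"
    using face_elem[OF m] bj by blast
qed

definition bv :: "nat \<Rightarrow> 'a \<Rightarrow> real" where "bv m x = bw k m (idx S x)"

lemma bv_s: "j < k + 1 \<Longrightarrow> bv m (s j) = bw k m j" unfolding bv_def using idx_s by simp

definition cw :: "nat \<Rightarrow> real" where
  "cw m = (if m = k then 1 / real k else 1 / (real k ^ 2 + real k - 1))"

lemma sum_bw:
  assumes m: "m < k + 1"
  shows "(\<Sum>j\<in>{0..<k+1} - {m}. bw k m j) = 1"
proof (cases "m = k")
  case True
  then have "{0..<k+1} - {m} = {0..<k}" by auto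
  then show ?thesis using True k1 by (simp add: bw_def)
next
  case False
  then have mk: "m < k" using m by simp
  let ?D = "real k ^ 2 + real k - 1"
  have e: "{0..<k+1} - {m} = insert k ({0..<k} - {m})" using mk by auto
  have "(\<Sum>j\<in>{0..<k+1} - {m}. bw k m j) = bw k m k + (\<Sum>j\<in>{0..<k} - {m}. bw k m j)"
    unfolding e by (rule sum.insert) auto
  also have "(\<Sum>j\<in>{0..<k} - {m}. bw k m j) = (\<Sum>j\<in>{0..<k} - {m}. (real k + 1) / ?D)"
    by (rule sum.cong) (auto simp: bw_def False)
  also have "\<dots> = (real k - 1) * ((real k + 1) / ?D)"
    using mk k1 by (simp add: card_Diff_singleton of_nat_diff)
  finally have "(\<Sum>j\<in>{0..<k+1} - {m}. bw k m j) = (real k / ?D) + (real k - 1) * ((real k + 1) / ?D)"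
    using False by (simp add: bw_def)
  also have "\<dots> = (real k + (real k - 1) * (real k + 1)) / ?D" by (simp only: times_divide_eq_right) (rule add_divide_distrib[symmetric])
  also have "real k + (real k - 1) * (real k + 1) = ?D" by (simp add: algebra_simps power2_eq_square)
  also have "?D / ?D = 1" using D_pos by simp
  finally show ?thesis .
qed

lemma Qval:
  assumes m: "m < k + 1" and l: "l < k"
  shows "(\<Sum>z\<in>face m. bv m z * wit2 S k z l) = (if l \<noteq> m then bw k m l else 0) - (if m \<noteq> k then bw k m k else 0)"
proof -
  have "(\<Sum>z\<in>face m. bv m z * wit2 S k z l) = (\<Sum>j\<in>{0..<k+1} - {m}. bw k m j * Yw k j l)"
    unfolding sum_face[OF m] by (rule sum.cong) (auto simp: bv_s wit2_s)
  then show ?thesis using sumY[of m k l "bw k m"] m l by simp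
qed

lemma wit2_solves:
  assumes m: "m < k + 1" and kd: "k \<le> d"
  shows "solves d (wit2 S k) (face m) (bv m) (cw m)"
  unfolding solves_def
proof
  show "(\<Sum>x\<in>face m. bv m x) = 1"
  proof -
    have "(\<Sum>x\<in>face m. bv m x) = (\<Sum>j\<in>{0..<k+1} - {m}. bw k m j)"
      unfolding sum_face[OF m] by (rule sum.cong) (auto simp: bv_s)
    then show ?thesis using sum_bw[OF m] by simp
  qed
  let ?Q = "\<lambda>l. (\<Sum>z\<in>face m. bv m z * wit2 S k z l)"
  let ?D = "real k ^ 2 + real k - 1"
  show "\<forall>x\<in>face m. (\<Sum>l<d. ?Q l * wit2 S k x l) = cw m"
  proof
    fix x assume x: "x \<in> face m"
    obtain j where j: "j < k + 1" "j \<noteq> m" "x = s j" using face_elem[OF m x] by blast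
    have "(\<Sum>l<d. ?Q l * wit2 S k x l) = (\<Sum>l<d. ?Q l * Yw k j l)" using j wit2_s by simp
    also have "\<dots> = cw m"
    proof (cases "j < k")
      case True
      have "(\<Sum>l<d. ?Q l * Yw k j l) = ?Q j" by (rule sumQ_j[OF True kd])
      also have "\<dots> = bw k m j - (if m \<noteq> k then bw k m k else 0)" using Qval[OF m True] j by simp
      also have "\<dots> = cw m"
      proof (cases "m = k")
        case True then show ?thesis using \<open>j < k\<close> by (simp add: bw_def cw_def)
      next
        case False
        have "bw k m j - bw k m k = (real k + 1) / ?D - real k / ?D" using False \<open>j < k\<close>
          by (simp add: bw_def)
        also have "\<dots> = ((real k + 1) - real k) / ?D" by (rule diff_divide_distrib[symmetric])
        finally have "bw k m j - bw k m k = ((real k + 1) - real k) / ?D" .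
        then show ?thesis using False by (simp add: cw_def)
      qed
      finally show ?thesis .
    next
      case False
      then have jk: "j = k" using j by simp
      then have mk: "m < k" using j m by simp
      have "(\<Sum>l<d. ?Q l * Yw k j l) = - (\<Sum>l<k. ?Q l)" unfolding jk by (rule sumQ_k[OF kd])
      also have "(\<Sum>l<k. ?Q l) = (\<Sum>l<k. (if l \<noteq> m then bw k m l else 0) - bw k m k)"
        by (rule sum.cong) (use Qval[OF m] mk in auto)
      also have "\<dots> = (\<Sum>l<k. (if l \<noteq> m then (real k + 1) / ?D else 0)) - real k * (real k / ?D)"
      proof -
        have "(\<Sum>l<k. (if l \<noteq> m then bw k m l else 0) - bw k m k) = (\<Sum>l<k. (if l \<noteq> m then bw k m l else 0)) - real k * bw k m k"
          by (simp add: sum_subtractf)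
        moreover have "(\<Sum>l<k. (if l \<noteq> m then bw k m l else 0)) = (\<Sum>l<k. (if l \<noteq> m then (real k + 1) / ?D else 0))"
          by (rule sum.cong) (use mk in \<open>auto simp: bw_def\<close>)
        moreover have "bw k m k = real k / ?D" using mk by (simp add: bw_def)
        ultimately show ?thesis by simp
      qed
      also have "(\<Sum>l<k. (if l \<noteq> m then (real k + 1) / ?D else 0)) = (\<Sum>l\<in>{..<k} - {m}. (real k + 1) / ?D)"
      proof -
        have "{l. l \<noteq> m} = - {m}" by auto
        then show ?thesis by (simp add: sum.If_cases Diff_eq)
      qed
      also have "\<dots> = (real k - 1) * ((real k + 1) / ?D)"
        using mk k1 by (simp add: card_Diff_singleton of_nat_diff)
      finally have "(\<Sum>l<d. ?Q l * Yw k j l) = - ((real k - 1) * ((real k + 1) / ?D) - real k * (real k / ?D))" .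
      also have "\<dots> = (real k * real k - (real k - 1) * (real k + 1)) / ?D" by (simp add: diff_divide_distrib)
      also have "\<dots> = 1 / ?D" by (simp add: algebra_simps)
      also have "\<dots> = cw m" using mk by (simp add: cw_def)
      finally show ?thesis .
    qed
    finally show "(\<Sum>l<d. ?Q l * wit2 S k x l) = cw m" .
  qed
qed

end


lemma lin_aux: "x + y = 0 \<Longrightarrow> y = - z \<Longrightarrow> z = (x::real)" by simp

context simplex_setup
begin

definition Mdet :: "nat \<Rightarrow> ('a \<Rightarrow> nat \<Rightarrow> real) \<Rightarrow> real mat" where
  "Mdet d q = mat (k+1) (k+1) (\<lambda>(m, j). if j = m then 0 else
      det (replace_col (Bm d q (face m)) (rhs k) (idx (face m) (s j))))"

definition M2 :: "(nat \<Rightarrow> 'a \<Rightarrow> real) \<Rightarrow> real mat" where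
  "M2 \<beta> = mat (k+1) (k+1) (\<lambda>(m, j). if j = m then 0 else \<beta> m (s j))"

lemma Mdet_carrier: "Mdet d q \<in> carrier_mat (k+1) (k+1)" unfolding Mdet_def by simp
lemma M2_carrier: "M2 \<beta> \<in> carrier_mat (k+1) (k+1)" unfolding M2_def by simp

lemma Mdet_scale:
  assumes sol: "\<And>m. m < k + 1 \<Longrightarrow> solves d q (face m) (\<beta> m) (c m)"
    and mj: "m < k + 1" "j < k + 1"
  shows "Mdet d q $$ (m, j) = det (Bm d q (face m)) * M2 \<beta> $$ (m, j)"
proof (cases "j = m")
  case True then show ?thesis using mj by (simp add: Mdet_def M2_def)
next
  case False
  have sj: "s j \<in> face m" using s_in_face[OF mj] False by simp
  have "det (replace_col (Bm d q (face m)) (rhs (card (face m))) (idx (face m) (s j))) = \<beta> m (s j) * det (Bm d q (face m))"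
    by (rule cramer_solves[OF finite_face sol[OF mj(1)] sj])
  then show ?thesis using mj False card_face[OF mj(1)] by (simp add: Mdet_def M2_def)
qed

lemma Mdet_poly:
  assumes SV: "S \<subseteq> V"
  shows "ispoly V d (\<lambda>q. det (Mdet d q))"
proof (rule ispoly_det[OF Mdet_carrier])
  fix m j assume mj: "m < k + 1" "j < k + 1"
  show "ispoly V d (\<lambda>q. Mdet d q $$ (m, j))"
  proof (cases "j = m")
    case True then show ?thesis using mj by (simp add: Mdet_def ispoly_0)
  next
    case False
    have "ispoly V d (\<lambda>q. det (replace_col (Bm d q (face m)) (rhs (card (face m))) (idx (face m) (s j))))"
      by (rule ispoly_det_Bm_col[OF finite_face]) (use face_sub SV in blast)
    then show ?thesis using mj False card_face[OF mj(1)] by (simp add: Mdet_def)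
  qed
qed

lemma M2_mult:
  assumes u: "u \<in> carrier_vec (k+1)" and m: "m < k + 1"
  shows "(M2 \<beta> *\<^sub>v u) $ m = (\<Sum>j\<in>{0..<k+1} - {m}. \<beta> m (s j) * u $ j)"
proof -
  have "(M2 \<beta> *\<^sub>v u) $ m = (\<Sum>j\<in>{0..<k+1}. (if j = m then 0 else \<beta> m (s j)) * u $ j)"
    using u m by (simp add: M2_def scalar_prod_def Matrix.row_def)
  also have "\<dots> = (if m = m then 0 else \<beta> m (s m)) * u $ m + (\<Sum>j\<in>{0..<k+1} - {m}. (if j = m then 0 else \<beta> m (s j)) * u $ j)"
    by (rule sum.remove) (use m in auto)
  also have "\<dots> = (\<Sum>j\<in>{0..<k+1} - {m}. (if j = m then 0 else \<beta> m (s j)) * u $ j)" by simp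
  also have "\<dots> = (\<Sum>j\<in>{0..<k+1} - {m}. \<beta> m (s j) * u $ j)"
    by (rule sum.cong) auto
  finally show ?thesis .
qed

lemma wit_Mdet_nz:
  assumes kd: "k \<le> d"
  shows "det (Mdet d (wit2 S k)) \<noteq> 0"
proof
  assume "det (Mdet d (wit2 S k)) = 0"
  then obtain u where u: "u \<in> carrier_vec (k+1)" "u \<noteq> 0\<^sub>v (k+1)" "Mdet d (wit2 S k) *\<^sub>v u = 0\<^sub>v (k+1)"
    using det_0_iff_vec_prod_zero[OF Mdet_carrier] by blast
  let ?D = "real k ^ 2 + real k - 1"
  let ?a = "(real k + 1) / ?D" and ?b = "real k / ?D"
  have sc: "Mdet d (wit2 S k) $$ (m, j) = det (Bm d (wit2 S k) (face m)) * M2 bv $$ (m, j)"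
    if "m < k + 1" "j < k + 1" for m j
    using Mdet_scale[of d "wit2 S k" bv cw, OF wit2_solves[OF _ kd] that] .
  have eq: "(\<Sum>j\<in>{0..<k+1} - {m}. bw k m j * u $ j) = 0" if m: "m < k + 1" for m
  proof -
    have "(Mdet d (wit2 S k) *\<^sub>v u) $ m = det (Bm d (wit2 S k) (face m)) * (M2 bv *\<^sub>v u) $ m"
      by (rule mat_row_scale[OF Mdet_carrier M2_carrier sc u(1) m])
    then have "det (Bm d (wit2 S k) (face m)) * (M2 bv *\<^sub>v u) $ m = 0" using u(3) m by simp
    then have "(M2 bv *\<^sub>v u) $ m = 0" using wit2_det_nz[OF m kd] by simp
    moreover have "(\<Sum>j\<in>{0..<k+1} - {m}. bv m (s j) * u $ j) = (\<Sum>j\<in>{0..<k+1} - {m}. bw k m j * u $ j)"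
      by (rule sum.cong) (auto simp: bv_s)
    ultimately show ?thesis unfolding M2_mult[OF u(1) m] by simp
  qed
  define U where "U = (\<Sum>j<k. u $ j)"
  have U0: "U = 0"
  proof -
    have "{0..<k+1} - {k} = {0..<k}" by auto
    then have "(\<Sum>j\<in>{0..<k}. bw k k j * u $ j) = 0" using eq[of k] by simp
    then have "(\<Sum>j\<in>{0..<k}. (1 / real k) * u $ j) = 0" by (simp add: bw_def)
    then have "(1 / real k) * U = 0" unfolding U_def sum_distrib_left[symmetric] by (simp add: atLeast0LessThan)
    then show ?thesis using k1 by simp
  qed
  have um: "?a * u $ m = ?b * u $ k" if m: "m < k" for m
  proof -
    have e: "{0..<k+1} - {m} = insert k ({0..<k} - {m})" using m by auto
    have "(\<Sum>j\<in>{0..<k+1} - {m}. bw k m j * u $ j) = bw k m k * u $ k + (\<Sum>j\<in>{0..<k} - {m}. bw k m j * u $ j)"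
      unfolding e by (rule sum.insert) auto
    also have "(\<Sum>j\<in>{0..<k} - {m}. bw k m j * u $ j) = (\<Sum>j\<in>{0..<k} - {m}. ?a * u $ j)"
      by (rule sum.cong) (use m in \<open>auto simp: bw_def\<close>)
    also have "\<dots> = ?a * (\<Sum>j\<in>{0..<k} - {m}. u $ j)" by (rule sum_distrib_left[symmetric])
    also have "(\<Sum>j\<in>{0..<k} - {m}. u $ j) = U - u $ m"
      unfolding U_def using m by (simp add: sum_diff1 atLeast0LessThan)
    finally have "?b * u $ k + ?a * (U - u $ m) = 0" using eq[of m] m by (simp add: bw_def)
    moreover have "?a * (U - u $ m) = - (?a * u $ m)" using U0 by simp
    ultimately show ?thesis by (rule lin_aux)
  qed
  have apos: "?a > 0" and bpos: "?b > 0" using D_pos k1 by auto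
  have "?a * U = (\<Sum>m<k. ?a * u $ m)" unfolding U_def by (rule sum_distrib_left)
  also have "\<dots> = (\<Sum>m<k. ?b * u $ k)" by (rule sum.cong[OF refl], rule um) simp
  also have "\<dots> = real k * (?b * u $ k)" by simp
  finally have "real k * (?b * u $ k) = 0" using U0 by simp
  then have uk: "u $ k = 0" using k1 bpos D_pos by simp
  have "u $ j = 0" if "j < k + 1" for j
  proof (cases "j = k")
    case True then show ?thesis using uk by simp
  next
    case False then have "j < k" using that by simp
    then have "?a * u $ j = 0" using um uk by simp
    then show ?thesis using apos D_pos by simp
  qed
  then have "u = 0\<^sub>v (k+1)" using u(1) by (intro eq_vecI) auto
  then show False using u(2) by simp
qed

end


context simplex_setup
begin

lemma generic_M2_nz:
  assumes g: "generic_config d V p" and SV: "S \<subseteq> V" and kd: "k \<le> d"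
  shows "det (M2 (\<lambda>m. proj_coeffs d p (face m))) \<noteq> 0"
proof
  let ?M = "M2 (\<lambda>m. proj_coeffs d p (face m))"
  assume "det ?M = 0"
  then obtain w where w: "w \<in> carrier_vec (k+1)" "w \<noteq> 0\<^sub>v (k+1)" "?M *\<^sub>v w = 0\<^sub>v (k+1)"
    using det_0_iff_vec_prod_zero[OF M2_carrier] by blast
  have fV: "face m \<subseteq> V" for m using face_sub SV by blast
  have DB: "det (Bm d p (face m)) \<noteq> 0" if "m < k + 1" for m
    by (rule generic_det_nz[OF g finite_face fV]) (use card_face[OF that] k1 kd in auto)
  define cc where "cc m = (SOME c. solves d p (face m) (proj_coeffs d p (face m)) c)" for m
  have sol: "solves d p (face m) (proj_coeffs d p (face m)) (cc m)" if "m < k + 1" for m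
  proof -
    have "\<exists>c. solves d p (face m) (proj_coeffs d p (face m)) c"
      using proj_coeffs_solves[OF finite_face _ DB[OF that]] card_face[OF that] k1 by simp
    then show ?thesis unfolding cc_def by (rule someI_ex)
  qed
  have sc: "Mdet d p $$ (m, j) = det (Bm d p (face m)) * ?M $$ (m, j)"
    if "m < k + 1" "j < k + 1" for m j
    using Mdet_scale[of d p "\<lambda>m. proj_coeffs d p (face m)" cc, OF sol that] .
  have "Mdet d p *\<^sub>v w = 0\<^sub>v (k+1)"
  proof (rule eq_vecI)
    show "dim_vec (Mdet d p *\<^sub>v w) = dim_vec (0\<^sub>v (k + 1))" by (simp add: Mdet_def)
    fix m assume "m < dim_vec (0\<^sub>v (k + 1))"
    then have m: "m < k + 1" by simp
    have "(Mdet d p *\<^sub>v w) $ m = det (Bm d p (face m)) * (?M *\<^sub>v w) $ m"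
      by (rule mat_row_scale[OF Mdet_carrier M2_carrier sc w(1) m])
    then show "(Mdet d p *\<^sub>v w) $ m = 0\<^sub>v (k + 1) $ m" using w(3) m by simp
  qed
  then have "det (Mdet d p) = 0"
    using det_0_iff_vec_prod_zero[OF Mdet_carrier] w(1,2) by blast
  then have "det (Mdet d (wit2 S k)) = 0"
    by (rule generic_poly_zero[OF g Mdet_poly[OF SV], where q = "wit2 S k"])
  then show False using wit_Mdet_nz[OF kd] by simp
qed

lemma simplex_span:
  assumes g: "generic_config d V p" and SV: "S \<subseteq> V" and kd: "k \<le> d" and i: "i < k + 1"
  shows "\<exists>c. \<forall>x. (\<Sum>m = 0..<k+1. c m * A_matrix d p (face m) x) = (if x = s i then 1 else 0)"
proof -
  let ?M = "M2 (\<lambda>m. proj_coeffs d p (face m))"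
  obtain N where N: "N \<in> carrier_mat (k+1) (k+1)" "N * ?M = 1\<^sub>m (k+1)"
    using det_non_zero_imp_unit[OF M2_carrier generic_M2_nz[OF g SV kd], of undefined]
    unfolding Units_def by (auto simp: ring_mat_simps)
  have Aent: "A_matrix d p (face m) (s j) = ?M $$ (m, j)" if "m < k + 1" "j < k + 1" for m j
  proof (cases "j = m")
    case True
    then have "s j \<notin> face m" using s_in_face[OF that] by simp
    then show ?thesis using True that by (simp add: A_matrix_def M2_def)
  next
    case False
    then have "s j \<in> face m" using s_in_face[OF that] by simp
    then show ?thesis using False that by (simp add: A_matrix_def M2_def)
  qed
  show ?thesis
  proof (intro exI allI)
    fix x
    show "(\<Sum>m = 0..<k+1. N $$ (i, m) * A_matrix d p (face m) x) = (if x = s i then 1 else 0)"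
    proof (cases "x \<in> S")
      case True
      then have "x \<in> s ` {0..<k+1}" using S_eq by simp
      then obtain j where j0: "j \<in> {0..<k+1}" and j2: "x = s j" by blast
      then have j: "j < k + 1" "x = s j" by auto
      have "(\<Sum>m = 0..<k+1. N $$ (i, m) * A_matrix d p (face m) x) = (\<Sum>m = 0..<k+1. N $$ (i, m) * ?M $$ (m, j))"
        by (rule sum.cong) (use Aent j in auto)
      also have "\<dots> = (N * ?M) $$ (i, j)"
      proof -
        have dN: "dim_row N = k + 1" "dim_col N = k + 1" using N(1) by auto
        have dM: "dim_row ?M = k + 1" "dim_col ?M = k + 1" by (auto simp: M2_def)
        have "(N * ?M) $$ (i, j) = row N i \<bullet> col ?M j" using dN dM i j by simp
        also have "\<dots> = (\<Sum>m\<in>{0..<k+1}. row N i $ m * col ?M j $ m)"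
          unfolding scalar_prod_def using dM by simp
        also have "\<dots> = (\<Sum>m = 0..<k+1. N $$ (i, m) * ?M $$ (m, j))"
          by (rule sum.cong) (use dN dM i j in auto)
        finally show ?thesis by simp
      qed
      also have "\<dots> = (if i = j then 1 else 0)" using N(2) i j by simp
      also have "\<dots> = (if x = s i then 1 else 0)" using j s_inj[OF i j(1)] by auto
      finally show ?thesis .
    next
      case False
      then have "x \<notin> face m" for m using face_sub by blast
      then have "(\<Sum>m = 0..<k+1. N $$ (i, m) * A_matrix d p (face m) x) = 0" by (simp add: A_matrix_def)
      moreover have "x \<noteq> s i" using False s_in[OF i] by blast
      ultimately show ?thesis by simp
    qed
  qed
qed

end


definition fsc :: "real \<Rightarrow> ('x \<Rightarrow> real) \<Rightarrow> 'x \<Rightarrow> real" where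
  "fsc c f = (\<lambda>x. c * f x)"

interpretation fv: vector_space "fsc :: real \<Rightarrow> ('x \<Rightarrow> real) \<Rightarrow> 'x \<Rightarrow> real"
  by unfold_locales (auto simp: fsc_def fun_eq_iff algebra_simps)

lemma sum_fun_apply: "(\<Sum>w\<in>W. f w) x = (\<Sum>w\<in>W. f w x)" for f :: "'b \<Rightarrow> 'a \<Rightarrow> real"
proof (induction W rule: infinite_finite_induct)
  case (infinite A) then show ?case by simp
next
  case empty then show ?case by simp
next
  case (insert w F) then show ?case by simp
qed

definition dlt :: "'a \<Rightarrow> 'a \<Rightarrow> real" where "dlt v = (\<lambda>x. if x = v then 1 else 0)"

lemma dlt_eq_iff: "dlt a = dlt b \<longleftrightarrow> a = b"
  by (metis dlt_def zero_neq_one)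

lemma row_in_span_dlt:
  assumes finV: "finite V" and z: "\<forall>x. x \<notin> V \<longrightarrow> f x = 0"
  shows "f \<in> fv.span (dlt ` V)"
proof -
  have "f = (\<Sum>v\<in>V. fsc (f v) (dlt v))"
  proof
    fix x
    have "(\<Sum>v\<in>V. fsc (f v) (dlt v)) x = (\<Sum>v\<in>V. f v * dlt v x)"
      by (simp add: sum_fun_apply fsc_def)
    also have "\<dots> = (\<Sum>v\<in>V. if v = x then f v else 0)"
      by (rule sum.cong) (auto simp: dlt_def)
    also have "\<dots> = f x" using finV z by (auto simp: sum.delta)
    finally show "f x = (\<Sum>v\<in>V. fsc (f v) (dlt v)) x" by simp
  qed
  also have "\<dots> \<in> fv.span (dlt ` V)"
    by (intro fv.span_sum fv.span_scale fv.span_base) auto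
  finally show ?thesis .
qed

lemma indep_rows_inj:
  assumes fin: "finite F" and ind: "rows_lin_indep V A F"
  shows "inj_on A F"
proof (rule inj_onI, rule ccontr)
  fix D1 D2 assume D: "D1 \<in> F" "D2 \<in> F" "A D1 = A D2" "D1 \<noteq> D2"
  define c where "c r = (if r = D1 then 1 else if r = D2 then -1 else (0::real))" for r
  have "\<forall>x\<in>V. (\<Sum>r\<in>F. c r * A r x) = 0"
  proof
    fix x
    have "(\<Sum>r\<in>F. c r * A r x) = (\<Sum>r\<in>F. (if r = D1 then A D1 x else 0) - (if r = D2 then A D2 x else 0))"
      by (rule sum.cong) (use D(4) in \<open>auto simp: c_def\<close>)
    also have "\<dots> = A D1 x - A D2 x" using fin D by (simp add: sum_subtractf sum.delta)
    finally show "(\<Sum>r\<in>F. c r * A r x) = 0" using D(3) by simp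
  qed
  then have "c D1 = 0" using ind D(1) unfolding rows_lin_indep_def by blast
  then show False by (simp add: c_def)
qed

lemma indep_rows_independent:
  assumes fin: "finite F" and ind: "rows_lin_indep V A F" and z: "\<forall>D\<in>F. \<forall>x. x \<notin> V \<longrightarrow> A D x = 0"
  shows "fv.independent (A ` F)"
proof
  have inj: "inj_on A F" by (rule indep_rows_inj[OF fin ind])
  assume "fv.dependent (A ` F)"
  then obtain u v where uv: "v \<in> A ` F" "u v \<noteq> 0" "(\<Sum>w\<in>A ` F. fsc (u w) w) = 0"
    using fv.dependent_finite[of "A ` F"] fin by auto
  define c where "c r = u (A r)" for r
  have "\<forall>x\<in>V. (\<Sum>r\<in>F. c r * A r x) = 0"
  proof
    fix x
    have "(\<Sum>r\<in>F. c r * A r x) = (\<Sum>w\<in>A ` F. u w * w x)"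
      unfolding c_def by (rule sum.reindex[OF inj, symmetric, unfolded comp_def])
    also have "\<dots> = (\<Sum>w\<in>A ` F. fsc (u w) w) x" by (simp add: sum_fun_apply fsc_def)
    finally show "(\<Sum>r\<in>F. c r * A r x) = 0" using uv(3) by simp
  qed
  then have "\<forall>r\<in>F. c r = 0" using ind unfolding rows_lin_indep_def by blast
  then show False using uv(1,2) unfolding c_def by auto
qed

lemma rank_upper:
  assumes finV: "finite V" and F: "finite F" and ind: "rows_lin_indep V A F"
    and z: "\<forall>D\<in>F. \<forall>x. x \<notin> V \<longrightarrow> A D x = 0"
  shows "card F \<le> card V"
proof -
  have "card F = card (A ` F)" using card_image[OF indep_rows_inj[OF F ind]] by simp
  also have "\<dots> \<le> card (dlt ` V)"
    using fv.independent_span_bound[OF finite_imageI[OF finV] indep_rows_independent[OF F ind z]]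
      row_in_span_dlt[OF finV] z by blast
  also have "\<dots> \<le> card V" by (rule card_image_le[OF finV])
  finally show ?thesis .
qed

lemma dlt_independent:
  assumes finV: "finite V"
  shows "fv.independent (dlt ` V)"
proof
  assume "fv.dependent (dlt ` V)"
  then obtain u v where uv: "v \<in> dlt ` V" "u v \<noteq> 0" "(\<Sum>w\<in>dlt ` V. fsc (u w) w) = 0"
    using fv.dependent_finite[of "dlt ` V"] finV by auto
  obtain a where a: "a \<in> V" "v = dlt a" using uv(1) by auto
  have wa: "w a = (if w = dlt a then 1 else 0)" if "w \<in> dlt ` V" for w
    using that dlt_eq_iff by (auto simp: dlt_def)
  have "0 = (\<Sum>w\<in>dlt ` V. fsc (u w) w) a" using uv(3) by simp
  also have "\<dots> = (\<Sum>w\<in>dlt ` V. u w * w a)" by (simp add: sum_fun_apply fsc_def)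
  also have "\<dots> = (\<Sum>w\<in>dlt ` V. if w = dlt a then u w else 0)"
    by (rule sum.cong) (simp_all add: wa)
  also have "\<dots> = u (dlt a)" using finV a by (simp add: sum.delta)
  finally show False using uv(2) a by simp
qed

lemma rank_lower:
  assumes finV: "finite V" and finE: "finite E"
    and z: "\<forall>D\<in>E. \<forall>x. x \<notin> V \<longrightarrow> A D x = 0"
    and sp: "\<forall>v\<in>V. dlt v \<in> fv.span (A ` E)"
  shows "\<exists>F. F \<subseteq> E \<and> rows_lin_indep V A F \<and> card V \<le> card F"
proof -
  obtain B where B: "B \<subseteq> A ` E" "fv.independent B" "A ` E \<subseteq> fv.span B"
    by (rule fv.maximal_independent_subset)
  have finB: "finite B" using B(1) finE finite_subset by blast
  have "dlt ` V \<subseteq> fv.span B"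
  proof
    fix w assume "w \<in> dlt ` V"
    then have "w \<in> fv.span (A ` E)" using sp by auto
    also have "fv.span (A ` E) \<subseteq> fv.span B"
      using fv.span_mono[OF B(3)] fv.span_span by blast
    finally show "w \<in> fv.span B" .
  qed
  then have "card (dlt ` V) \<le> card B"
    using fv.independent_span_bound[OF finB dlt_independent[OF finV]] by blast
  moreover have "card (dlt ` V) = card V"
    by (rule card_image) (auto intro: inj_onI simp: dlt_eq_iff)
  ultimately have cB: "card V \<le> card B" by simp
  define pick where "pick w = (SOME D. D \<in> E \<and> A D = w)" for w
  have pk: "pick w \<in> E \<and> A (pick w) = w" if "w \<in> B" for w
  proof -
    have "\<exists>D. D \<in> E \<and> A D = w" using that B(1) by auto
    then show ?thesis unfolding pick_def by (rule someI_ex)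
  qed
  have injp: "inj_on pick B" by (rule inj_onI) (metis pk)
  define F where "F = pick ` B"
  have FE: "F \<subseteq> E" unfolding F_def using pk by auto
  have cF: "card F = card B" unfolding F_def by (rule card_image[OF injp])
  have "rows_lin_indep V A F"
    unfolding rows_lin_indep_def
  proof (intro allI impI)
    fix c assume h: "\<forall>x\<in>V. (\<Sum>r\<in>F. c r * A r x) = 0"
    have "(\<Sum>w\<in>B. fsc (c (pick w)) w) = 0"
    proof
      fix x
      have "(\<Sum>w\<in>B. fsc (c (pick w)) w) x = (\<Sum>w\<in>B. c (pick w) * w x)" by (simp add: sum_fun_apply fsc_def)
      also have "\<dots> = (\<Sum>w\<in>B. c (pick w) * A (pick w) x)" by (rule sum.cong) (simp_all add: pk)
      also have "\<dots> = (\<Sum>r\<in>F. c r * A r x)"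
        unfolding F_def by (rule sum.reindex[OF injp, symmetric, unfolded comp_def])
      also have "\<dots> = 0"
      proof (cases "x \<in> V")
        case True then show ?thesis using h by simp
      next
        case False
        have "A r x = 0" if "r \<in> F" for r using z FE that False by blast
        then show ?thesis by simp
      qed
      finally show "(\<Sum>w\<in>B. fsc (c (pick w)) w) x = 0 x" by simp
    qed
    then have "\<forall>w\<in>B. c (pick w) = 0"
      using B(2) fv.dependent_finite[OF finB] by auto
    then show "\<forall>r\<in>F. c r = 0" unfolding F_def by auto
  qed
  then show ?thesis using FE cF cB by auto
qed

lemma rank_eq:
  assumes finV: "finite V" and finE: "finite E"
    and z: "\<forall>D\<in>E. \<forall>x. x \<notin> V \<longrightarrow> A D x = 0"
    and sp: "\<forall>v\<in>V. dlt v \<in> fv.span (A ` E)"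
  shows "row_matroid_rank E V A = card V"
proof -
  let ?S = "{card F | F. F \<subseteq> E \<and> rows_lin_indep V A F}"
  have finS: "finite ?S"
  proof -
    have "?S \<subseteq> card ` Pow E" by auto
    then show ?thesis using finE finite_subset by blast
  qed
  obtain F0 where F0: "F0 \<subseteq> E" "rows_lin_indep V A F0" "card V \<le> card F0"
    using rank_lower[OF finV finE z sp] by blast
  have le: "n \<le> card V" if "n \<in> ?S" for n
  proof -
    obtain F where F: "n = card F" "F \<subseteq> E" "rows_lin_indep V A F" using \<open>n \<in> ?S\<close> by blast
    have "finite F" using F(2) finE finite_subset by blast
    then show ?thesis using rank_upper[OF finV _ F(3)] z F by blast
  qed
  have mem: "card F0 \<in> ?S" using F0 by blast
  have "Max ?S = card V"
  proof (rule antisym)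
    show "Max ?S \<le> card V" using finS mem le by (subst Max_le_iff) auto
    show "card V \<le> Max ?S" using F0(3) Max_ge[OF finS mem] by simp
  qed
  then show ?thesis unfolding row_matroid_rank_def .
qed


lemma row_expand:
  assumes fin: "finite D" and z: "\<forall>x. x \<notin> D \<longrightarrow> f x = 0"
  shows "f = (\<Sum>v\<in>D. fsc (f v) (dlt v))"
proof
  fix x
  have "(\<Sum>v\<in>D. fsc (f v) (dlt v)) x = (\<Sum>v\<in>D. f v * dlt v x)"
    by (simp add: sum_fun_apply fsc_def)
  also have "\<dots> = (\<Sum>v\<in>D. if v = x then f v else 0)"
    by (rule sum.cong) (auto simp: dlt_def)
  also have "\<dots> = f x" using fin z by (auto simp: sum.delta)
  finally show "f x = (\<Sum>v\<in>D. fsc (f v) (dlt v)) x" by simp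
qed

lemma hyp_adj_sym: "hyp_adj k E D1 D2 \<Longrightarrow> hyp_adj k E D2 D1"
  unfolding hyp_adj_def by (simp add: Int_commute)

lemma scr_sym: "strongly_conn_rel k E D T \<Longrightarrow> strongly_conn_rel k E T D"
  unfolding strongly_conn_rel_def
proof (induction rule: rtranclp_induct)
  case base then show ?case by simp
next
  case (step y z)
  then show ?case using hyp_adj_sym converse_rtranclp_into_rtranclp by metis
qed

theorem lemma3p4:
  fixes k d :: nat and V :: "'a set" and E :: "'a set set"
  assumes "k_uniform k V E"
    and "V = \<Union>E"
    and "\<forall>C\<in>strong_components k E. contains_simplex k V C"
    and "d \<ge> k"
    and "generic_config d V p"
  shows "row_matroid_rank E V (A_matrix d p) = card V"
proof -
  note ku = assms(1) and VE = assms(2) and comps = assms(3) and kd = assms(4) and g = assms(5)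
  have finV: "finite V" using ku unfolding k_uniform_def by simp
  have ED: "\<And>D. D \<in> E \<Longrightarrow> D \<subseteq> V \<and> card D = k" using ku unfolding k_uniform_def by blast
  have finE: "finite E"
  proof -
    have "E \<subseteq> Pow V" using ED by blast
    then show ?thesis using finV finite_subset by blast
  qed
  have finD: "\<And>D. D \<in> E \<Longrightarrow> finite D" using ED finV finite_subset by blast
  have z: "\<forall>D\<in>E. \<forall>x. x \<notin> V \<longrightarrow> A_matrix d p D x = 0"
  proof (intro ballI allI impI)
    fix D x assume "D \<in> E" "x \<notin> V"
    then have "x \<notin> D" using ED by blast
    then show "A_matrix d p D x = 0" by (simp add: A_matrix_def)
  qed
  let ?W = "A_matrix d p ` E"
  define Z where "Z = {v. dlt v \<in> fv.span ?W}"
  have adj: "D2 \<subseteq> Z" if D1Z: "D1 \<subseteq> Z" and h: "hyp_adj k E D1 D2" and k1: "k \<ge> 1" for D1 D2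
  proof -
    have D1: "D1 \<in> E" and D2: "D2 \<in> E" and ci: "card (D1 \<inter> D2) = k - 1" using h unfolding hyp_adj_def by auto
    have f2: "finite D2" using finD[OF D2] .
    have c2: "card D2 = k" using ED[OF D2] by simp
    have "card (D2 - D1) = card D2 - card (D2 \<inter> D1)" using f2 by (simp add: card_Diff_subset_Int)
    also have "\<dots> = 1" using c2 ci k1 by (simp add: Int_commute)
    finally obtain y where y: "D2 - D1 = {y}" using card_1_singletonE by blast
    have yD2: "y \<in> D2" using y by auto
    have others: "D2 - {y} \<subseteq> Z" using y D1Z by auto
    let ?R = "A_matrix d p D2"
    have zR: "\<forall>x. x \<notin> D2 \<longrightarrow> ?R x = 0" unfolding A_matrix_def by simp
    have "?R = (\<Sum>v\<in>D2. fsc (?R v) (dlt v))" by (rule row_expand[OF f2 zR])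
    also have "\<dots> = fsc (?R y) (dlt y) + (\<Sum>v\<in>D2 - {y}. fsc (?R v) (dlt v))"
      by (rule sum.remove[OF f2 yD2])
    finally have e: "?R = fsc (?R y) (dlt y) + (\<Sum>v\<in>D2 - {y}. fsc (?R v) (dlt v))" .
    have "fsc (?R y) (dlt y) = ?R - (\<Sum>v\<in>D2 - {y}. fsc (?R v) (dlt v))"
      unfolding eq_diff_eq by (rule e[symmetric])
    also have "\<dots> \<in> fv.span ?W"
    proof (rule fv.span_diff)
      show "?R \<in> fv.span ?W" using D2 by (intro fv.span_base) auto
      show "(\<Sum>v\<in>D2 - {y}. fsc (?R v) (dlt v)) \<in> fv.span ?W"
        using others unfolding Z_def by (intro fv.span_sum fv.span_scale) auto
    qed
    finally have sy: "fsc (?R y) (dlt y) \<in> fv.span ?W" .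
    have Ry: "?R y \<noteq> 0"
      using generic_alpha_nz[OF g f2 _ _ _ yD2] ED[OF D2] k1 kd yD2 by (simp add: A_matrix_def)
    have "dlt y = fsc (1 / ?R y) (fsc (?R y) (dlt y))" using Ry by (simp add: fsc_def)
    also have "\<dots> \<in> fv.span ?W" by (rule fv.span_scale[OF sy])
    finally have "y \<in> Z" unfolding Z_def by simp
    then show ?thesis using others by blast
  qed
  have rt: "D \<subseteq> Z" if r: "strongly_conn_rel k E T D" and TZ: "T \<subseteq> Z" and k1: "k \<ge> 1" for T D
    using r unfolding strongly_conn_rel_def
  proof (induction rule: rtranclp_induct)
    case base then show ?case using TZ .
  next
    case (step y z) show ?case by (rule adj[OF step.IH step.hyps(2) k1])
  qed
  have DZ: "D \<subseteq> Z" if D: "D \<in> E" for D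
  proof -
    let ?C = "{D'. D' \<in> E \<and> strongly_conn_rel k E D D'}"
    have "?C \<in> strong_components k E" unfolding strong_components_def using D by blast
    then have "contains_simplex k V ?C" using comps by (rule bspec[rotated])
    then obtain S where S: "S \<subseteq> V" "finite S" "card S = k + 1"
      and ST0: "\<forall>T. T \<subseteq> S \<and> card T = k \<longrightarrow> T \<in> ?C"
      unfolding contains_simplex_def by blast
    have ST: "T \<in> ?C" if "T \<subseteq> S" "card T = k" for T using ST0 that by blast
    have k1: "k \<ge> 1"
    proof (rule ccontr)
      assume "\<not> k \<ge> 1"
      then have k0: "k = 0" by simp
      obtain v where "v \<in> S" using S(3) by fastforce
      then have "v \<in> \<Union>E" using S(1) VE by blast
      then obtain D' where D': "D' \<in> E" "v \<in> D'" by blast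
      have "card D' = 0" using ED[OF D'(1)] k0 by simp
      then have "D' = {}" using finD[OF D'(1)] by simp
      then show False using D'(2) by simp
    qed
    interpret sx: simplex_setup S k by unfold_locales (use S k1 in auto)
    have SZ: "S \<subseteq> Z"
    proof
      fix x assume "x \<in> S"
      then have "x \<in> enum S ` {0..<k+1}" using sx.S_eq by simp
      then obtain i where i: "i < k + 1" "x = enum S i" by auto
      obtain c where c: "\<forall>x. (\<Sum>m = 0..<k+1. c m * A_matrix d p (sx.face m) x) = (if x = enum S i then 1 else 0)"
        using sx.simplex_span[OF g S(1) kd i(1)] by blast
      have "dlt (enum S i) = (\<Sum>m = 0..<k+1. fsc (c m) (A_matrix d p (sx.face m)))"
      proof
        fix y show "dlt (enum S i) y = (\<Sum>m = 0..<k+1. fsc (c m) (A_matrix d p (sx.face m))) y"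
          using c by (simp add: sum_fun_apply fsc_def dlt_def)
      qed
      also have "\<dots> \<in> fv.span ?W"
      proof (intro fv.span_sum fv.span_scale fv.span_base)
        fix m assume "m \<in> {0..<k+1}"
        then have "sx.face m \<in> ?C" using ST[OF sx.face_sub sx.card_face] by simp
        then show "A_matrix d p (sx.face m) \<in> ?W" by blast
      qed
      finally show "x \<in> Z" unfolding Z_def using i by simp
    qed
    have "sx.face 0 \<in> ?C" using ST[OF sx.face_sub sx.card_face] by simp
    then have "strongly_conn_rel k E D (sx.face 0)" by simp
    then have r0: "strongly_conn_rel k E (sx.face 0) D" by (rule scr_sym)
    have "sx.face 0 \<subseteq> Z" using SZ sx.face_sub by blast
    then show ?thesis by (rule rt[OF r0 _ k1])
  qed
  have sp: "\<forall>v\<in>V. dlt v \<in> fv.span ?W"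
  proof
    fix v assume "v \<in> V"
    then obtain D where "D \<in> E" "v \<in> D" using VE by blast
    then show "dlt v \<in> fv.span ?W" using DZ unfolding Z_def by blast
  qed
  show ?thesis by (rule rank_eq[OF finV finE z sp])
qed


end
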